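(* Assume Assumption 1 and the fast charging regime $x_{\max}\ge R_{\max}$. Let $\beta=(\lambda_0,\alpha_0,\dots,\lambda_T,\alpha_T)$ and $\beta'=(\lambda_0',\alpha_0',\dots,\lambda_T',\alpha_T')$ be risk-aversion vectors with $\lambda_t\le\lambda_t'$ and $\alpha_t\le\alpha_t'$ for all $t$. Then for every $t\in\{0,1,\dots,T-1\}$, every $p\in\mathbb R$, and every $r\in(0,R_{\max})$ at which both derivatives exist, $\partial_r\tilde V_{t,T}(r,p\,|\,\beta)\ge\partial_r\tilde V_{t,T}(r,p\,|\,\beta')$; consequently $r_{t,T}(p\,|\,\beta)\le r_{t,T}(p\,|\,\beta')$ for every $t\in\{0,\dots,T-1\}$ and $p\in\mathbb R$.
   Context: Model (dynamic EV charging). Fix a horizon $T\in\{1,2,\dots\}$, a battery capacity $R_{\max}>0$, a maximal charge per period $x_{\max}>0$, an initial charge $R_0\in[0,R_{\max}]$, an access fee $c_f\in\mathbb R$, a reference price $p_{\mathrm{ref}}>0$, a constant $\gamma_h\ge 0$, a deterministic seasonality function $g:\mathbb R\to\mathbb R$, and price parameters $\kappa_Y>0$, $\mu_Y\in\mathbb R$, $\sigma_Y>0$, $\lambda_J\in(0,1)$, $\mu_J\in\mathbb R$, $\sigma_J>0$. Spot prices are $P_t=g(t)+Y_t$ with $Y_{t+1}=Y_te^{-\kappa_Y}+\mu_Y(1-e^{-\kappa_Y})+\xi_{t+1}+X_{t+1}J_{t+1}$, where $(\xi_t)$ are i.i.d. $\mathcal N\big(0,\sigma_Y^2(1-e^{-2\kappa_Y})/(2\kappa_Y)\big)$,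 $(X_t)$ are i.i.d. Bernoulli$(\lambda_J)$, $(J_t)$ are i.i.d. $\mathcal N(\mu_J,\sigma_J^2)$, all mutually independent. Define $\psi_{t+1}=g(t+1)-g(t)e^{-\kappa_Y}+\mu_Y(1-e^{-\kappa_Y})+\xi_{t+1}+X_{t+1}J_{t+1}$ and $\psi_{t+1,Y}=\psi_{t+1}-g(t+1)$ (so given $P_t=p$, $P_{t+1}$ has the law of $pe^{-\kappa_Y}+\psi_{t+1}$ and $Y_{t+1}$ that of $pe^{-\kappa_Y}+\psi_{t+1,Y}$). Let $\mathcal R=[0,R_{\max}]$, $\mathcal X(r)=[0,\min\{R_{\max}-r,x_{\max}\}]$, and shortage $h(r)=\min\{R_0+Tx_{\max},R_{\max}\}-r$. Let $\gamma_Y:\mathbb R\to(0,\infty)$ be a compensation function. Assumption 1: $\gamma_Y$ is positive, strictly increasing, and $L_{\gamma_Y}$-Lipschitz continuous with $L_{\gamma_Y}\le p_{\mathrm{ref}}^{-1}e^{2\kappa_Y}$. Risk measures. For $\alpha\in(0,1)$: $\mathrm{VaR}_\alpha(X)=\inf\{u:\mathbf P(X\le u)>\alpha\}$, $\mathrm{CVaR}_\alpha(X)=\inf_u\{u+(1-\alpha)^{-1}\mathbf E[(X-u)^+]\}$. For $\beta_t=(\lambda_t,\alpha_t)\in[0,1]\times(0,1)$, $\rho_{\beta_t}(X)=(1-\lambda_t)\mathbf E[X]+\lambda_t\mathrm{CVaR}_{\alpha_t}(X)$. A risk-aversion vector is $\beta=(\lambda_0,\alpha_0,\dots,\lambda_T,\alpha_T)$.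 Value functions. For $r\in\mathcal R$, $p\in\mathbb R$: $V_{T,T}(r,p\,|\,\beta)=\rho_{\beta_T}\big[\big(1+\gamma_h h(r)+\gamma_Y(pe^{-\kappa_Y}+\psi_{T+1,Y})\big)h(r)p_{\mathrm{ref}}\big]$, and for $t=T-1,\dots,0$: $\tilde V_{t,T}(r,p\,|\,\beta)=\rho_{\beta_t}\big[V_{t+1,T}(r,pe^{-\kappa_Y}+\psi_{t+1}\,|\,\beta)\big]$ (post-decision value function) and $V_{t,T}(r,p\,|\,\beta)=\min_{x\in\mathcal X(r)}\{xp-c_f+\tilde V_{t,T}(r+x,p\,|\,\beta)\}$. Threshold. For $t<T$, $r_{t,T}(p\,|\,\beta)$ is the smallest $\tilde r\in\mathcal R$ minimizing $\tilde r\,p+\tilde V_{t,T}(\tilde r,p\,|\,\beta)$ over $\tilde r\in\mathcal R$. *)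

theory Defs
  imports "HOL-Probability.Probability"
begin

record evm =
  Th    :: nat
  Rmax  :: real
  xmax  :: real
  R0    :: real
  cf    :: real
  pref  :: real
  gh    :: real
  gs    :: "real \<Rightarrow> real"    (* seasonality g *)
  kY    :: real
  muY   :: real
  sigY  :: real
  lamJ  :: real
  muJ   :: real
  sigJ  :: real
  gY    :: "real \<Rightarrow> real"    (* compensation function gamma_Y *)

definition valid_evm :: "evm \<Rightarrow> bool" where
  "valid_evm m \<longleftrightarrow> Th m \<ge> 1 \<and> Rmax m > 0 \<and> xmax m > 0 \<and> 0 \<le> R0 m \<and> R0 m \<le> Rmax m
     \<and> pref m > 0 \<and> gh m \<ge> 0 \<and> kY m > 0 \<and> sigY m > 0
     \<and> 0 < lamJ m \<and> lamJ m < 1 \<and> sigJ m > 0"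

definition assumption1 :: "evm \<Rightarrow> bool" where
  "assumption1 m \<longleftrightarrow> (\<forall>y. gY m y > 0) \<and> strict_mono (gY m)
     \<and> (\<exists>L. L \<le> exp (2 * kY m) / pref m \<and> (\<forall>x y. \<bar>gY m x - gY m y\<bar> \<le> L * \<bar>x - y\<bar>))"

definition sig_xi :: "evm \<Rightarrow> real" where
  "sig_xi m = sqrt (sigY m ^ 2 * (1 - exp (-2 * kY m)) / (2 * kY m))"

text \<open>Law of the random part xi + X*J, with xi ~ N(0, sig_xi^2), X ~ Bernoulli(lamJ),
  J ~ N(muJ, sigJ^2), all independent (product measure).\<close>
definition noise :: "evm \<Rightarrow> real measure" where
  "noise m = distr
     (density lborel (normal_density 0 (sig_xi m))
        \<Otimes>\<^sub>M (measure_pmf (bernoulli_pmf (lamJ m)) \<Otimes>\<^sub>M density lborel (normal_density (muJ m) (sigJ m))))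
     borel (\<lambda>(xi, x, j). xi + (if x then j else 0))"

text \<open>Deterministic part of psi_{t+1}: g(t+1) - g(t) e^{-kY} + muY (1 - e^{-kY}).\<close>
definition shift :: "evm \<Rightarrow> nat \<Rightarrow> real" where
  "shift m t = gs m (real t + 1) - gs m (real t) * exp (- kY m) + muY m * (1 - exp (- kY m))"

text \<open>Risk measures of the random variable f(Z), Z distributed according to M.\<close>
definition CVaR :: "real \<Rightarrow> real measure \<Rightarrow> (real \<Rightarrow> real) \<Rightarrow> real" where
  "CVaR \<alpha> M f = (INF u. u + (1 / (1 - \<alpha>)) * (\<integral>z. max (f z - u) 0 \<partial>M))"

definition rho :: "real \<times> real \<Rightarrow> real measure \<Rightarrow> (real \<Rightarrow> real) \<Rightarrow> real" where
  "rho b M f = (1 - fst b) * (\<integral>z. f z \<partial>M) + fst b * CVaR (snd b) M f"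

text \<open>Risk-aversion vector: beta t = (lambda_t, alpha_t).\<close>
definition valid_beta :: "evm \<Rightarrow> (nat \<Rightarrow> real \<times> real) \<Rightarrow> bool" where
  "valid_beta m \<beta> \<longleftrightarrow> (\<forall>t \<le> Th m. 0 \<le> fst (\<beta> t) \<and> fst (\<beta> t) \<le> 1 \<and> 0 < snd (\<beta> t) \<and> snd (\<beta> t) < 1)"

definition shortage :: "evm \<Rightarrow> real \<Rightarrow> real" where
  "shortage m r = min (R0 m + real (Th m) * xmax m) (Rmax m) - r"

definition Xset :: "evm \<Rightarrow> real \<Rightarrow> real set" where
  "Xset m r = {0 .. min (Rmax m - r) (xmax m)}"

text \<open>Vb m beta n r p = V_{T-n,T}(r,p | beta) for n \<le> T.\<close>
primrec Vb :: "evm \<Rightarrow> (nat \<Rightarrow> real \<times> real) \<Rightarrow> nat \<Rightarrow> real \<Rightarrow> real \<Rightarrow> real" where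
  "Vb m \<beta> 0 r p = rho (\<beta> (Th m)) (noise m)
     (\<lambda>z. (1 + gh m * shortage m r
            + gY m (p * exp (- kY m) + (shift m (Th m) - gs m (real (Th m) + 1)) + z))
          * shortage m r * pref m)"
| "Vb m \<beta> (Suc n) r p =
     (INF x \<in> Xset m r. x * p - cf m
        + rho (\<beta> (Th m - Suc n)) (noise m)
            (\<lambda>z. Vb m \<beta> n (r + x) (p * exp (- kY m) + shift m (Th m - Suc n) + z)))"

definition V :: "evm \<Rightarrow> (nat \<Rightarrow> real \<times> real) \<Rightarrow> nat \<Rightarrow> real \<Rightarrow> real \<Rightarrow> real" where
  "V m \<beta> t r p = Vb m \<beta> (Th m - t) r p"

text \<open>Post-decision value function tilde V_{t,T}(r,p | beta), t < T.\<close>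
definition Vt :: "evm \<Rightarrow> (nat \<Rightarrow> real \<times> real) \<Rightarrow> nat \<Rightarrow> real \<Rightarrow> real \<Rightarrow> real" where
  "Vt m \<beta> t r p = rho (\<beta> t) (noise m) (\<lambda>z. V m \<beta> (t + 1) r (p * exp (- kY m) + shift m t + z))"

lemma V_Suc: "t < Th m \<Longrightarrow> V m \<beta> t r p = (INF x \<in> Xset m r. x * p - cf m + Vt m \<beta> t (r + x) p)"
proof -
  assume "t < Th m"
  then obtain n where n: "Th m - t = Suc n" "Th m - (t+1) = n" by (metis Suc_diff_Suc diff_Suc_1 Suc_eq_plus1 diff_diff_left)
  hence "Th m - Suc n = t" using \<open>t < Th m\<close> by simp
  thus ?thesis using n by (simp add: V_def Vt_def)
qed

definition thresh :: "evm \<Rightarrow> (nat \<Rightarrow> real \<times> real) \<Rightarrow> nat \<Rightarrow> real \<Rightarrow> real" where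
  "thresh m \<beta> t p = (THE r. r \<in> {0 .. Rmax m}
      \<and> (\<forall>r' \<in> {0 .. Rmax m}. r * p + Vt m \<beta> t r p \<le> r' * p + Vt m \<beta> t r' p)
      \<and> (\<forall>r' \<in> {0 .. Rmax m}. (\<forall>r'' \<in> {0 .. Rmax m}. r' * p + Vt m \<beta> t r' p \<le> r'' * p + Vt m \<beta> t r'' p) \<longrightarrow> r \<le> r'))"

end

theory Submission
  imports Defs
begin


lemma distr_pair_snd':
  assumes "prob_space M" "sigma_finite_measure N"
  shows "distr (M \<Otimes>\<^sub>M N) N snd = N"
proof (intro measure_eqI)
  interpret M: prob_space M by fact
  interpret N: sigma_finite_measure N by fact
  fix A assume A: "A \<in> sets (distr (M \<Otimes>\<^sub>M N) N snd)"
  from A have "emeasure (distr (M \<Otimes>\<^sub>M N) N snd) A = emeasure (M \<Otimes>\<^sub>M N) (space M \<times> A)"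
    by (auto simp add: emeasure_distr space_pair_measure dest: sets.sets_into_space intro!: arg_cong2[where f=emeasure])
  with A show "emeasure (distr (M \<Otimes>\<^sub>M N) N snd) A = emeasure N A"
    by (simp add: N.emeasure_pair_measure_Times M.emeasure_space_1)
qed simp

lemma sig_xi_pos: "valid_evm m \<Longrightarrow> sig_xi m > 0"
  unfolding sig_xi_def valid_evm_def
  by (auto intro!: divide_pos_pos mult_pos_pos)

lemma noise_facts:
  assumes "valid_evm m"
  shows "prob_space (noise m)" "sets (noise m) = sets borel"
    "integrable (noise m) (\<lambda>z. z)"
proof -
  define A where "A = density lborel (normal_density 0 (sig_xi m))"
  define B where "B = measure_pmf (bernoulli_pmf (lamJ m))"
  define C where "C = density lborel (normal_density (muJ m) (sigJ m))"
  define g where "g = (\<lambda>(xi::real, x::bool, j::real). xi + (if x then j else 0))"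
  have sp: "sig_xi m > 0" "sigJ m > 0" using sig_xi_pos assms by (auto simp: valid_evm_def)
  have pA: "prob_space A" unfolding A_def by (rule prob_space_normal_density[OF sp(1)])
  have pC: "prob_space C" unfolding C_def by (rule prob_space_normal_density[OF sp(2)])
  have pB: "prob_space B" unfolding B_def by (rule prob_space_measure_pmf)
  have pBC: "prob_space (B \<Otimes>\<^sub>M C)" by (rule prob_space_pair[OF pB pC])
  have pP: "prob_space (A \<Otimes>\<^sub>M (B \<Otimes>\<^sub>M C))" by (rule prob_space_pair[OF pA pBC])
  have gm: "g \<in> measurable (A \<Otimes>\<^sub>M (B \<Otimes>\<^sub>M C)) borel"
    unfolding g_def A_def B_def C_def by measurable
  have nz: "noise m = distr (A \<Otimes>\<^sub>M (B \<Otimes>\<^sub>M C)) borel g"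
    unfolding noise_def A_def B_def C_def g_def by simp
  show "prob_space (noise m)" unfolding nz by (rule prob_space.prob_space_distr[OF pP gm])
  show "sets (noise m) = sets borel" unfolding nz by simp
  have iA: "integrable A (\<lambda>x. x)"
  proof -
    have "integrable lborel (\<lambda>x. normal_density 0 (sig_xi m) x * x)"
      by (rule integrable_normal_moment_nz_1) (use sp in auto)
    thus ?thesis unfolding A_def
      by (subst integrable_density) (auto simp: normal_density_nonneg)
  qed
  have iC: "integrable C (\<lambda>x. x)"
  proof -
    have "integrable lborel (\<lambda>x. normal_density (muJ m) (sigJ m) x * x)"
      by (rule integrable_normal_moment_nz_1) (use sp in auto)
    thus ?thesis unfolding C_def
      by (subst integrable_density) (auto simp: normal_density_nonneg)
  qed
  have i1: "integrable (A \<Otimes>\<^sub>M (B \<Otimes>\<^sub>M C)) (\<lambda>w. \<bar>fst w\<bar>)"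
  proof -
    have "integrable (distr (A \<Otimes>\<^sub>M (B \<Otimes>\<^sub>M C)) A fst) abs"
      using prob_space.distr_pair_fst[OF pBC, of A] iA by simp
    thus ?thesis by (subst (asm) integrable_distr_eq) (auto simp: A_def B_def C_def)
  qed
  have i2: "integrable (A \<Otimes>\<^sub>M (B \<Otimes>\<^sub>M C)) (\<lambda>w. \<bar>snd (snd w)\<bar>)"
  proof -
    have sA: "sigma_finite_measure C" using pC prob_space_imp_sigma_finite by blast
    have sBC: "sigma_finite_measure (B \<Otimes>\<^sub>M C)" using pBC prob_space_imp_sigma_finite by blast
    have "integrable (distr (B \<Otimes>\<^sub>M C) C snd) abs"
      using distr_pair_snd'[OF pB sA] iC by simp
    hence "integrable (B \<Otimes>\<^sub>M C) (\<lambda>w. \<bar>snd w\<bar>)"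
      by (subst (asm) integrable_distr_eq) (auto simp: A_def B_def C_def)
    hence "integrable (distr (A \<Otimes>\<^sub>M (B \<Otimes>\<^sub>M C)) (B \<Otimes>\<^sub>M C) snd) (\<lambda>w. \<bar>snd w\<bar>)"
      using distr_pair_snd'[OF pA sBC] by simp
    thus ?thesis by (subst (asm) integrable_distr_eq) (auto simp: A_def B_def C_def)
  qed
  have "integrable (A \<Otimes>\<^sub>M (B \<Otimes>\<^sub>M C)) (\<lambda>w. g w)"
  proof (rule Bochner_Integration.integrable_bound[OF Bochner_Integration.integrable_add[OF i1 i2]])
    show "g \<in> borel_measurable (A \<Otimes>\<^sub>M (B \<Otimes>\<^sub>M C))" by (rule gm)
    show "AE x in A \<Otimes>\<^sub>M (B \<Otimes>\<^sub>M C). norm (g x) \<le> norm (\<bar>fst x\<bar> + \<bar>snd (snd x)\<bar>)"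
      by (auto simp: g_def split: prod.splits)
  qed
  thus "integrable (noise m) (\<lambda>z. z)" unfolding nz
    by (subst integrable_distr_eq[OF gm]) auto
qed


locale nz = fixes N :: "real measure"
  assumes psN: "prob_space N" and sN: "sets N = sets borel" and iZ: "integrable N (\<lambda>z. z)"
begin

end

sublocale nz \<subseteq> rd: real_distribution N
  using psN sN by (simp add: real_distribution_def real_distribution_axioms_def)

context nz begin

lemma measN[measurable_cong]: "sets N = sets borel" by (rule sN)
lemma spN[simp]: "space N = UNIV" by simp

lemma cvar_lb:
  fixes w :: "real \<Rightarrow> real" and u \<alpha> :: real
  assumes w: "integrable N w" and a: "0 < \<alpha>" "\<alpha> < 1"
  shows "(\<integral>z. w z \<partial>N) \<le> u + (1 / (1 - \<alpha>)) * (\<integral>z. max (w z - u) 0 \<partial>N)"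
proof -
  have i: "integrable N (\<lambda>z. max (w z - u) 0)" 
  proof -
    have "integrable N (\<lambda>z. w z - u)" by (rule Bochner_Integration.integrable_diff[OF w rd.integrable_const])
    thus ?thesis by (rule Bochner_Integration.integrable_max[OF _ integrable_zero])
  qed
  have "(\<integral>z. w z - u \<partial>N) \<le> (\<integral>z. max (w z - u) 0 \<partial>N)"
    by (rule integral_mono) (use w i in auto)
  moreover have "(\<integral>z. w z - u \<partial>N) = (\<integral>z. w z \<partial>N) - u"
    using w rd.prob_space by simp
  moreover have "0 \<le> (\<integral>z. max (w z - u) 0 \<partial>N)" by (rule Bochner_Integration.integral_nonneg) simp
  moreover have "1 \<le> 1 / (1 - \<alpha>)" using a by simp
  ultimately have "(\<integral>z. max (w z - u) 0 \<partial>N) \<le> (1 / (1 - \<alpha>)) * (\<integral>z. max (w z - u) 0 \<partial>N)"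
    by (metis mult_1 mult_right_mono mult.commute)
  with \<open>(\<integral>z. w z - u \<partial>N) \<le> _\<close> \<open>(\<integral>z. w z - u \<partial>N) = _\<close> show ?thesis by linarith
qed

lemma cvar_bdd:
  fixes w :: "real \<Rightarrow> real" and \<alpha> :: real
  assumes w: "integrable N w" and a: "0 < \<alpha>" "\<alpha> < 1"
  shows "bdd_below (range (\<lambda>u. u + (1 / (1 - \<alpha>)) * (\<integral>z. max (w z - u) 0 \<partial>N)))"
  by (rule bdd_belowI2[where m="\<integral>z. w z \<partial>N"]) (rule cvar_lb[OF assms])

lemma cvar_ge_E:
  assumes w: "integrable N w" and a: "0 < \<alpha>" "\<alpha> < 1"
  shows "(\<integral>z. w z \<partial>N) \<le> CVaR \<alpha> N w"
  unfolding CVaR_def by (rule cINF_greatest) (use cvar_lb[OF assms] in auto)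

lemma cvar_mono_alpha:
  assumes w: "integrable N w" and a: "0 < \<alpha>" "\<alpha> \<le> \<alpha>'" "\<alpha>' < 1"
  shows "CVaR \<alpha> N w \<le> CVaR \<alpha>' N w"
  unfolding CVaR_def
proof (rule cINF_mono)
  show "bdd_below (range (\<lambda>u. u + (1 / (1 - \<alpha>)) * (\<integral>z. max (w z - u) 0 \<partial>N)))"
    by (rule cvar_bdd) (use assms in auto)
  fix u
  have "0 \<le> (\<integral>z. max (w z - u) 0 \<partial>N)" by (rule Bochner_Integration.integral_nonneg) simp
  moreover have "1 / (1 - \<alpha>) \<le> 1 / (1 - \<alpha>')" using a by (simp add: frac_le)
  ultimately have "1 / (1 - \<alpha>) * (\<integral>z. max (w z - u) 0 \<partial>N) \<le> 1 / (1 - \<alpha>') * (\<integral>z. max (w z - u) 0 \<partial>N)"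
    by (rule mult_right_mono[rotated])
  then show "\<exists>n\<in>UNIV. n + 1 / (1 - \<alpha>) * (\<integral>z. max (w z - n) 0 \<partial>N)
      \<le> u + 1 / (1 - \<alpha>') * (\<integral>z. max (w z - u) 0 \<partial>N)"
    by (intro bexI[of _ u]) auto
qed auto

definition validb :: "real \<times> real \<Rightarrow> bool" where
  "validb b \<longleftrightarrow> 0 \<le> fst b \<and> fst b \<le> 1 \<and> 0 < snd b \<and> snd b < 1"

lemma rho_cmp:
  assumes w: "integrable N w" and b: "validb b" "validb b'"
    and le: "fst b \<le> fst b'" "snd b \<le> snd b'"
  shows "rho b N w \<le> rho b' N w"
proof -
  let ?E = "\<integral>z. w z \<partial>N"
  have c1: "?E \<le> CVaR (snd b) N w" using cvar_ge_E[OF w] b by (auto simp: validb_def)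
  have c2: "CVaR (snd b) N w \<le> CVaR (snd b') N w" using cvar_mono_alpha[OF w] b le by (auto simp: validb_def)
  have "rho b N w = ?E + fst b * (CVaR (snd b) N w - ?E)" unfolding rho_def by algebra
  also have "\<dots> \<le> ?E + fst b' * (CVaR (snd b) N w - ?E)"
    using le c1 by (auto intro: mult_right_mono)
  also have "\<dots> \<le> ?E + fst b' * (CVaR (snd b') N w - ?E)"
    using c2 b by (auto simp: validb_def intro: mult_left_mono)
  also have "\<dots> = rho b' N w" unfolding rho_def by algebra
  finally show ?thesis .
qed

lemma quantile_ex:
  assumes a: "0 < \<alpha>" "\<alpha> < 1"
  shows "\<exists>q \<theta>. 0 \<le> \<theta> \<and> \<theta> \<le> measure N {q} \<and> measure N {q<..} + \<theta> = 1 - \<alpha>"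
proof -
  define S where "S = {t. \<alpha> \<le> cdf N t}"
  have "\<forall>\<^sub>F t in at_top. cdf N t > \<alpha>"
    using rd.cdf_lim_at_top_prob a by (auto intro: order_tendstoD)
  then obtain t0 where "\<alpha> < cdf N t0" by (auto simp: eventually_at_top_linorder)
  hence Sne: "S \<noteq> {}" unfolding S_def by (metis (mono_tags) empty_Collect_eq less_imp_le)
  have "\<forall>\<^sub>F t in at_bot. cdf N t < \<alpha>"
    using rd.cdf_lim_at_bot a by (auto intro: order_tendstoD)
  then obtain t1 where t1: "\<And>t. t \<le> t1 \<Longrightarrow> cdf N t < \<alpha>" by (auto simp: eventually_at_bot_linorder)
  have Sbdd: "bdd_below S" unfolding S_def
  proof (rule bdd_belowI[of _ t1])
    fix x assume "x \<in> {t. \<alpha> \<le> cdf N t}"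
    hence "\<alpha> \<le> cdf N x" by simp
    thus "t1 \<le> x" using t1[of x] by linarith
  qed
  define q where "q = Inf S"
  have below: "cdf N t < \<alpha>" if "t < q" for t
  proof (rule ccontr)
    assume "\<not> cdf N t < \<alpha>" hence "t \<in> S" by (simp add: S_def)
    hence "q \<le> t" unfolding q_def using Sbdd by (rule cInf_lower)
    with that show False by simp
  qed
  have above: "\<alpha> \<le> cdf N t" if qt: "q < t" for t
  proof -
    obtain s where "s \<in> S" "s < t" using cInf_lessD[OF Sne, of t] qt unfolding q_def by blast
    thus ?thesis unfolding S_def using rd.cdf_nondecreasing[of s t] by auto
  qed
  have "(cdf N \<longlongrightarrow> cdf N q) (at_right q)"
    using rd.cdf_is_right_cont[of q] by (simp add: continuous_within)
  hence cq: "\<alpha> \<le> cdf N q"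
    by (rule tendsto_lowerbound) (auto simp: eventually_at_right_field above trivial_limit_at_right_real
          intro: exI[of _ "q + 1"])
  have lq: "measure N {..<q} \<le> \<alpha>"
    using rd.cdf_at_left[of q]
    by (rule tendsto_upperbound) (auto simp: eventually_at_left_field below less_imp_le trivial_limit_at_left_real
          intro: exI[of _ "q - 1"])
  have d1: "measure N {q<..} = 1 - cdf N q"
  proof -
    have "measure N ({..q} \<union> {q<..}) = measure N {..q} + measure N {q<..}"
      by (rule rd.finite_measure_Union) auto
    moreover have "{..q} \<union> {q<..} = UNIV" by auto
    ultimately show ?thesis using rd.prob_space by (simp add: cdf_def2)
  qed
  have d2: "cdf N q = measure N {..<q} + measure N {q}"
  proof -
    have "measure N ({..<q} \<union> {q}) = measure N {..<q} + measure N {q}"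
      by (rule rd.finite_measure_Union) auto
    moreover have "{..<q} \<union> {q} = {..q}" by auto
    ultimately show ?thesis by (simp add: cdf_def2)
  qed
  show ?thesis
    by (rule exI[of _ q], rule exI[of _ "cdf N q - \<alpha>"]) (use cq lq d1 d2 in auto)
qed


lemma cvar_rep:
  fixes u :: "real \<Rightarrow> real"
  assumes a: "0 < \<alpha>" "\<alpha> < 1" and th: "0 \<le> \<theta>" "\<theta> \<le> measure N {q}" "measure N {q<..} + \<theta> = 1 - \<alpha>"
    and mu: "mono u" and iu: "integrable N u"
  shows "CVaR \<alpha> N u = ((\<integral>z. u z * indicator {q<..} z \<partial>N) + \<theta> * u q) / (1 - \<alpha>)"
proof -
  define g where "g = (\<lambda>w. w + (1/(1-\<alpha>)) * (\<integral>z. max (u z - w) 0 \<partial>N))"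
  define I where "I = (\<integral>z. u z * indicator {q<..} z \<partial>N)"
  define c where "c = (I + \<theta> * u q) / (1 - \<alpha>)"
  have iI: "integrable N (\<lambda>z. u z * indicator {q<..} z)"
    by (rule integrable_real_mult_indicator) (use iu in auto)
  have mx: "integrable N (\<lambda>z. max (u z - w) 0)" for w
  proof -
    have "integrable N (\<lambda>z. u z - w)" by (rule Bochner_Integration.integrable_diff[OF iu rd.integrable_const])
    thus ?thesis by (rule Bochner_Integration.integrable_max[OF _ integrable_zero])
  qed
  have low: "c \<le> g w" for w
  proof -
    define h where "h = (\<lambda>z. u z * indicator {q<..} z - w * indicator {q<..} z + max (u q - w) 0 * indicator {q} z)"
    have ih: "integrable N h" unfolding h_def
      by (intro Bochner_Integration.integrable_add Bochner_Integration.integrable_diff iI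
          integrable_real_mult_indicator rd.integrable_const) auto
    have "(\<integral>z. h z \<partial>N) \<le> (\<integral>z. max (u z - w) 0 \<partial>N)"
    proof (rule integral_mono[OF ih mx])
      fix z show "h z \<le> max (u z - w) 0"
        by (cases "q < z"; cases "z = q") (auto simp: h_def indicator_def)
    qed
    moreover have "(\<integral>z. h z \<partial>N) = I - w * measure N {q<..} + max (u q - w) 0 * measure N {q}"
      unfolding h_def I_def
      by (subst Bochner_Integration.integral_add Bochner_Integration.integral_diff,
          (intro Bochner_Integration.integrable_add Bochner_Integration.integrable_diff iI
          integrable_real_mult_indicator rd.integrable_const; auto)+)+
         (simp add: mult.commute)
    moreover have "\<theta> * (u q - w) \<le> max (u q - w) 0 * measure N {q}"
    proof -
      have "\<theta> * (u q - w) \<le> \<theta> * max (u q - w) 0" using th by (auto intro: mult_left_mono)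
      also have "\<dots> \<le> measure N {q} * max (u q - w) 0" using th by (auto intro: mult_right_mono)
      finally show ?thesis by (simp add: mult.commute)
    qed
    ultimately have "I + \<theta> * u q - w * (measure N {q<..} + \<theta>) \<le> (\<integral>z. max (u z - w) 0 \<partial>N)"
      by (simp add: algebra_simps)
    hence "I + \<theta> * u q \<le> w * (1 - \<alpha>) + (\<integral>z. max (u z - w) 0 \<partial>N)" using th(3) by simp
    hence "(I + \<theta> * u q) / (1 - \<alpha>) \<le> (w * (1 - \<alpha>) + (\<integral>z. max (u z - w) 0 \<partial>N)) / (1 - \<alpha>)"
      using a by (intro divide_right_mono) auto
    also have "\<dots> = g w" using a unfolding g_def by (simp add: field_simps)
    finally show ?thesis unfolding c_def .
  qed
  have att: "g (u q) = c"
  proof -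
    have "(\<lambda>z. max (u z - u q) 0) = (\<lambda>z. u z * indicator {q<..} z - u q * indicator {q<..} z)"
    proof
      fix z show "max (u z - u q) 0 = u z * indicator {q<..} z - u q * indicator {q<..} z"
        using mu[THEN monoD, of z q] mu[THEN monoD, of q z]
        by (cases "q < z") (auto simp: indicator_def)
    qed
    hence "(\<integral>z. max (u z - u q) 0 \<partial>N) = I - u q * measure N {q<..}"
      unfolding I_def
      by (simp add: Bochner_Integration.integral_diff[OF iI integrable_real_mult_indicator] mult.commute)
    moreover have "u q * measure N {q<..} = u q * (1 - \<alpha>) - \<theta> * u q"
    proof -
      have "measure N {q<..} = 1 - \<alpha> - \<theta>" using th(3) by linarith
      hence "u q * measure N {q<..} = u q * (1 - \<alpha> - \<theta>)" by simp
      also have "\<dots> = u q * (1 - \<alpha>) - \<theta> * u q" by (simp add: algebra_simps)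
      finally show ?thesis .
    qed
    ultimately have "(\<integral>z. max (u z - u q) 0 \<partial>N) = I + \<theta> * u q - u q * (1 - \<alpha>)" by simp
    thus ?thesis unfolding g_def c_def using a by (simp add: field_simps)
  qed
  have "CVaR \<alpha> N u = Inf (range g)" unfolding CVaR_def g_def by simp
  also have "\<dots> = c" by (rule cInf_eq_minimum[of c]) (use att low in auto)
  finally show ?thesis unfolding c_def I_def .
qed


definition qt :: "real \<Rightarrow> real \<times> real" where
  "qt \<alpha> = (SOME p. 0 \<le> snd p \<and> snd p \<le> measure N {fst p} \<and> measure N {fst p<..} + snd p = 1 - \<alpha>)"

lemma qt:
  assumes "0 < \<alpha>" "\<alpha> < 1"
  shows "0 \<le> snd (qt \<alpha>) \<and> snd (qt \<alpha>) \<le> measure N {fst (qt \<alpha>)} \<and> measure N {fst (qt \<alpha>)<..} + snd (qt \<alpha>) = 1 - \<alpha>"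
proof -
  obtain q \<theta> where "0 \<le> \<theta> \<and> \<theta> \<le> measure N {q} \<and> measure N {q<..} + \<theta> = 1 - \<alpha>"
    using quantile_ex[OF assms] by blast
  hence "\<exists>p. 0 \<le> snd p \<and> snd p \<le> measure N {fst p} \<and> measure N {fst p<..} + snd p = 1 - \<alpha>"
    by (intro exI[of _ "(q, \<theta>)"]) simp
  thus ?thesis unfolding qt_def by (rule someI_ex)
qed

definition Lin :: "real \<times> real \<Rightarrow> (real \<Rightarrow> real) \<Rightarrow> real" where
  "Lin b u = (1 - fst b) * (\<integral>z. u z \<partial>N) + fst b * (((\<integral>z. u z * indicator {fst (qt (snd b))<..} z \<partial>N)
     + snd (qt (snd b)) * u (fst (qt (snd b)))) / (1 - snd b))"

lemma rho_Lin:
  assumes "validb b" "mono u" "integrable N u"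
  shows "rho b N u = Lin b u"
proof -
  have a: "0 < snd b" "snd b < 1" using assms(1) by (auto simp: validb_def)
  note q = qt[OF a]
  show ?thesis unfolding rho_def Lin_def
    using cvar_rep[OF a, of "snd (qt (snd b))" "fst (qt (snd b))", OF _ _ _ assms(2,3)] q by simp
qed

lemma iI:
  fixes u :: "real \<Rightarrow> real"
  assumes "A \<in> sets borel" "integrable N u" shows "integrable N (\<lambda>z. u z * indicator A z)"
  using integrable_real_mult_indicator[of A N u] assms by simp

lemma Lin_add:
  assumes "integrable N u" "integrable N v"
  shows "Lin b (\<lambda>z. u z + v z) = Lin b u + Lin b v"
proof -
  have e: "(\<lambda>z. (u z + v z) * indicator A z) = (\<lambda>z. u z * indicator A z + v z * indicator A z)" for A
    by (auto simp: algebra_simps)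
  show ?thesis unfolding Lin_def e
    using assms iI[OF _ assms(1)] iI[OF _ assms(2)]
    by (simp add: Bochner_Integration.integral_add add_divide_distrib algebra_simps)
qed

lemma Lin_cmult:
  shows "Lin b (\<lambda>z. c * u z) = c * Lin b u"
proof -
  have e: "(\<lambda>z. (c * u z) * indicator A z) = (\<lambda>z. c * (u z * indicator A z))" for A
    by (auto simp: algebra_simps)
  show ?thesis unfolding Lin_def e
    by (simp add: algebra_simps add_divide_distrib)
qed

lemma Lin_diff:
  assumes "integrable N u" "integrable N v"
  shows "Lin b (\<lambda>z. u z - v z) = Lin b u - Lin b v"
proof -
  have "Lin b (\<lambda>z. u z + (-1) * v z) = Lin b u + Lin b (\<lambda>z. (-1) * v z)"
    by (rule Lin_add) (use assms in auto)
  thus ?thesis using Lin_cmult[of b "-1" v] by simp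
qed

lemma Lin_const:
  assumes "validb b"
  shows "Lin b (\<lambda>z. c) = c"
proof -
  have a: "0 < snd b" "snd b < 1" using assms(1) by (auto simp: validb_def)
  note q = qt[OF a]
  have "(\<integral>z. c * indicator {fst (qt (snd b))<..} z \<partial>N) = c * measure N {fst (qt (snd b))<..}"
    by simp
  moreover have "c * measure N {fst (qt (snd b))<..} + snd (qt (snd b)) * c = c * (1 - snd b)"
  proof -
    have "c * measure N {fst (qt (snd b))<..} + snd (qt (snd b)) * c
       = c * (measure N {fst (qt (snd b))<..} + snd (qt (snd b)))" by algebra
    also have "\<dots> = c * (1 - snd b)" using q by simp
    finally show ?thesis .
  qed
  ultimately have "Lin b (\<lambda>z. c) = (1 - fst b) * c + fst b * c" unfolding Lin_def using a rd.prob_space by simp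
  thus ?thesis by (simp add: algebra_simps)
qed

lemma Lin_mono:
  assumes "validb b" "integrable N u" "integrable N v" "\<And>z. u z \<le> v z"
  shows "Lin b u \<le> Lin b v"
proof -
  have a: "0 < snd b" "snd b < 1" "0 \<le> fst b" "fst b \<le> 1" using assms(1) by (auto simp: validb_def)
  note q = qt[OF a(1,2)]
  have i1: "(\<integral>z. u z \<partial>N) \<le> (\<integral>z. v z \<partial>N)" by (rule integral_mono) (use assms in auto)
  have i2: "(\<integral>z. u z * indicator A z \<partial>N) \<le> (\<integral>z. v z * indicator A z \<partial>N)" if "A \<in> sets borel" for A
    by (rule integral_mono) (use assms iI[OF that] in \<open>auto simp: indicator_def\<close>)
  have i3: "snd (qt (snd b)) * u (fst (qt (snd b))) \<le> snd (qt (snd b)) * v (fst (qt (snd b)))"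
    using q assms(4) by (auto intro: mult_left_mono)
  have "((\<integral>z. u z * indicator {fst (qt (snd b))<..} z \<partial>N) + snd (qt (snd b)) * u (fst (qt (snd b)))) / (1 - snd b)
     \<le> ((\<integral>z. v z * indicator {fst (qt (snd b))<..} z \<partial>N) + snd (qt (snd b)) * v (fst (qt (snd b)))) / (1 - snd b)"
    using a i2 i3 by (intro divide_right_mono add_mono) auto
  thus ?thesis unfolding Lin_def using a i1
    by (intro add_mono mult_left_mono) auto
qed

lemma Lin_bound:
  assumes "validb b" "integrable N u" "integrable N h" "\<And>z. \<bar>u z\<bar> \<le> h z"
  shows "\<bar>Lin b u\<bar> \<le> ((\<integral>z. h z \<partial>N) + h (fst (qt (snd b)))) / (1 - snd b)"
proof -
  have a: "0 < snd b" "snd b < 1" "0 \<le> fst b" "fst b \<le> 1" using assms(1) by (auto simp: validb_def)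
  note q = qt[OF a(1,2)]
  define Q where "Q = fst (qt (snd b))"
  define T where "T = snd (qt (snd b))"
  have p1: "measure N {fst (qt (snd b))} \<le> 1" by (rule rd.prob_le_1)
  have T1: "T \<le> 1" "0 \<le> T" using q p1 unfolding T_def Q_def by linarith+
  have hp: "0 \<le> h z" for z using assms(4)[of z] by linarith
  have H0: "0 \<le> (\<integral>z. h z \<partial>N)" using hp by simp
  have b1: "\<bar>\<integral>z. u z \<partial>N\<bar> \<le> (\<integral>z. h z \<partial>N)"
    using assms(2,3,4) by (intro integral_abs_bound_integral) auto
  have b2: "\<bar>\<integral>z. u z * indicator {Q<..} z \<partial>N\<bar> \<le> (\<integral>z. h z \<partial>N)"
    using assms(2,3,4) iI[OF _ assms(2), of "{Q<..}"] hp
    by (intro integral_abs_bound_integral) (auto simp: indicator_def abs_mult)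
  have b3: "\<bar>T * u Q\<bar> \<le> h Q"
  proof -
    have "\<bar>T * u Q\<bar> = T * \<bar>u Q\<bar>" using T1 by (simp add: abs_mult)
    also have "\<dots> \<le> 1 * h Q" using T1 assms(4)[of Q] hp[of Q] by (intro mult_mono) auto
    finally show ?thesis by simp
  qed
  define X where "X = ((\<integral>z. u z * indicator {Q<..} z \<partial>N) + T * u Q) / (1 - snd b)"
  define Y where "Y = ((\<integral>z. h z \<partial>N) + h Q) / (1 - snd b)"
  have bX: "\<bar>X\<bar> \<le> Y"
  proof -
    have n: "\<bar>(\<integral>z. u z * indicator {Q<..} z \<partial>N) + T * u Q\<bar> \<le> (\<integral>z. h z \<partial>N) + h Q"
      using b2 b3 abs_triangle_ineq[of "\<integral>z. u z * indicator {Q<..} z \<partial>N" "T * u Q"] by linarith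
    have "\<bar>X\<bar> = \<bar>(\<integral>z. u z * indicator {Q<..} z \<partial>N) + T * u Q\<bar> / (1 - snd b)"
      unfolding X_def using a by (simp add: abs_div)
    also have "\<dots> \<le> Y" unfolding Y_def using a n by (intro divide_right_mono) auto
    finally show ?thesis .
  qed
  have YH: "(\<integral>z. h z \<partial>N) \<le> Y"
  proof -
    have "(\<integral>z. h z \<partial>N) \<le> (\<integral>z. h z \<partial>N) + h Q" using hp by simp
    also have "\<dots> \<le> ((\<integral>z. h z \<partial>N) + h Q) / (1 - snd b)"
    proof -
      have "((\<integral>z. h z \<partial>N) + h Q) * (1 - snd b) \<le> ((\<integral>z. h z \<partial>N) + h Q) * 1"
        using a H0 hp[of Q] by (intro mult_left_mono) auto
      thus ?thesis using a by (simp add: le_divide_eq)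
    qed
    finally show ?thesis unfolding Y_def .
  qed
  have "\<bar>Lin b u\<bar> \<le> (1 - fst b) * \<bar>\<integral>z. u z \<partial>N\<bar> + fst b * \<bar>X\<bar>"
  proof -
    have "Lin b u = (1 - fst b) * (\<integral>z. u z \<partial>N) + fst b * X" unfolding Lin_def X_def Q_def T_def by simp
    hence "\<bar>Lin b u\<bar> \<le> \<bar>(1 - fst b) * (\<integral>z. u z \<partial>N)\<bar> + \<bar>fst b * X\<bar>" by (simp add: abs_triangle_ineq)
    thus ?thesis using a by (simp add: abs_mult)
  qed
  also have "\<dots> \<le> (1 - fst b) * Y + fst b * Y"
    using a b1 YH bX by (intro add_mono mult_left_mono) auto
  also have "\<dots> = Y" by (simp add: algebra_simps)
  finally show ?thesis unfolding Y_def Q_def .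
qed

end


locale frame = nz N for N :: "real measure" +
  fixes R e X :: real
  assumes Rpos: "0 < R" and epos: "0 < e" and XR: "R \<le> X"
begin

definition LG :: "(real \<Rightarrow> real \<Rightarrow> real) \<Rightarrow> bool" where
  "LG f \<longleftrightarrow> (\<exists>a b. 0 \<le> a \<and> 0 \<le> b \<and> (\<forall>r\<in>{0..R}. \<forall>p. \<bar>f r p\<bar> \<le> a + b * \<bar>p\<bar>))"

definition LIP :: "(real \<Rightarrow> real \<Rightarrow> real) \<Rightarrow> bool" where
  "LIP f \<longleftrightarrow> (\<exists>a b. 0 \<le> a \<and> 0 \<le> b \<and> (\<forall>r1\<in>{0..R}. \<forall>r2\<in>{0..R}. \<forall>p.
      \<bar>f r1 p - f r2 p\<bar> \<le> (a + b * \<bar>p\<bar>) * \<bar>r1 - r2\<bar>))"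

definition CVX :: "(real \<Rightarrow> real \<Rightarrow> real) \<Rightarrow> bool" where
  "CVX f \<longleftrightarrow> (\<forall>p. \<forall>x\<in>{0..R}. \<forall>y\<in>{0..R}. \<forall>t. 0 \<le> t \<and> t \<le> 1 \<longrightarrow>
      f ((1 - t) * x + t * y) p \<le> (1 - t) * f x p + t * f y p)"

definition MP :: "(real \<Rightarrow> real \<Rightarrow> real) \<Rightarrow> bool" where
  "MP f \<longleftrightarrow> (\<forall>r\<in>{0..R}. mono (f r))"

definition MD :: "(real \<Rightarrow> real \<Rightarrow> real) \<Rightarrow> bool" where
  "MD f \<longleftrightarrow> (\<forall>r1\<in>{0..R}. \<forall>r2\<in>{0..R}. r1 \<le> r2 \<longrightarrow> mono (\<lambda>p. f r1 p - f r2 p))"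

definition Props :: "(real \<Rightarrow> real \<Rightarrow> real) \<Rightarrow> bool" where
  "Props f \<longleftrightarrow> LG f \<and> LIP f \<and> CVX f \<and> MP f \<and> MD f"

definition Cmp :: "(real \<Rightarrow> real \<Rightarrow> real) \<Rightarrow> (real \<Rightarrow> real \<Rightarrow> real) \<Rightarrow> bool" where
  "Cmp f g \<longleftrightarrow> (\<forall>r1\<in>{0..R}. \<forall>r2\<in>{0..R}. \<forall>p. r1 \<le> r2 \<longrightarrow> f r1 p - f r2 p \<le> g r1 p - g r2 p)"

definition Tr :: "real \<times> real \<Rightarrow> real \<Rightarrow> (real \<Rightarrow> real \<Rightarrow> real) \<Rightarrow> real \<Rightarrow> real \<Rightarrow> real" where
  "Tr b s f = (\<lambda>r p. rho b N (\<lambda>z. f r (p * e + s + z)))"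

lemma iabs: "integrable N (\<lambda>z. \<bar>z\<bar>)" using iZ by simp

lemma integ:
  fixes g :: "real \<Rightarrow> real"
  assumes gm: "g \<in> borel_measurable borel" and bd: "\<And>y. \<bar>g y\<bar> \<le> a + b * \<bar>y\<bar>" and b: "0 \<le> b"
  shows "integrable N (\<lambda>z. g (c + z))"
proof (rule Bochner_Integration.integrable_bound)
  show "integrable N (\<lambda>z. (a + b * \<bar>c\<bar>) + b * \<bar>z\<bar>)"
    using iabs by (intro Bochner_Integration.integrable_add rd.integrable_const integrable_mult_right) auto
  have "(\<lambda>z. g (c + z)) \<in> borel_measurable borel" using gm by measurable
  thus "(\<lambda>z. g (c + z)) \<in> borel_measurable N" by (simp add: measurable_cong_sets[OF sN refl])
  show "AE z in N. norm (g (c + z)) \<le> norm ((a + b * \<bar>c\<bar>) + b * \<bar>z\<bar>)"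
  proof (rule AE_I2)
    fix z
    have "\<bar>g (c + z)\<bar> \<le> a + b * \<bar>c + z\<bar>" by (rule bd)
    also have "\<dots> \<le> a + b * (\<bar>c\<bar> + \<bar>z\<bar>)" using b by (intro add_left_mono mult_left_mono abs_triangle_ineq) 
    finally have "\<bar>g (c + z)\<bar> \<le> (a + b * \<bar>c\<bar>) + b * \<bar>z\<bar>" by (simp add: algebra_simps)
    thus "norm (g (c + z)) \<le> norm ((a + b * \<bar>c\<bar>) + b * \<bar>z\<bar>)" by auto
  qed
qed

definition EZ where "EZ = (\<integral>z. \<bar>z\<bar> \<partial>N)"
definition QQ where "QQ b = \<bar>fst (qt (snd b))\<bar>"

lemma EZ_nonneg: "0 \<le> EZ" unfolding EZ_def by simp

lemma Lin_lg:
  assumes b: "validb b" and iu: "integrable N u" and bd: "\<And>z. \<bar>u z\<bar> \<le> A + B * \<bar>z\<bar>" and B: "0 \<le> B"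
  shows "\<bar>Lin b u\<bar> \<le> (2 * A + B * (EZ + QQ b)) / (1 - snd b)"
proof -
  have ih: "integrable N (\<lambda>z. A + B * \<bar>z\<bar>)"
    using iabs by (intro Bochner_Integration.integrable_add rd.integrable_const integrable_mult_right) auto
  have "\<bar>Lin b u\<bar> \<le> ((\<integral>z. A + B * \<bar>z\<bar> \<partial>N) + (A + B * \<bar>fst (qt (snd b))\<bar>)) / (1 - snd b)"
    by (rule Lin_bound[OF b iu ih bd])
  also have "(\<integral>z. A + B * \<bar>z\<bar> \<partial>N) = A + B * EZ"
    unfolding EZ_def using iabs rd.prob_space by simp
  finally show ?thesis unfolding QQ_def by (simp add: algebra_simps)
qed


lemma LG_D: "LG f \<Longrightarrow> \<exists>a b. 0 \<le> a \<and> 0 \<le> b \<and> (\<forall>r\<in>{0..R}. \<forall>p. \<bar>f r p\<bar> \<le> a + b * \<bar>p\<bar>)"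
  by (simp add: LG_def)

lemma shift_bd:
  fixes g :: "real \<Rightarrow> real"
  assumes "\<bar>g y\<bar> \<le> a + b * \<bar>y\<bar>" "0 \<le> b" "y = c + z"
  shows "\<bar>g y\<bar> \<le> (a + b * \<bar>c\<bar>) + b * \<bar>z\<bar>"
proof -
  have "b * \<bar>c + z\<bar> \<le> b * (\<bar>c\<bar> + \<bar>z\<bar>)" using mult_left_mono[OF abs_triangle_ineq[of c z] assms(2)] .
  thus ?thesis using assms by (simp add: algebra_simps)
qed

lemma c_bd: "\<bar>p * e + s\<bar> \<le> e * \<bar>p\<bar> + \<bar>s\<bar>"
proof -
  have "\<bar>p * e\<bar> = e * \<bar>p\<bar>" using epos by (simp add: abs_mult)
  thus ?thesis using abs_triangle_ineq[of "p * e" s] by linarith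
qed

lemma u_meas: "MP f \<Longrightarrow> r \<in> {0..R} \<Longrightarrow> f r \<in> borel_measurable borel"
  by (rule borel_measurable_mono) (simp add: MP_def)

lemma u_int:
  assumes "Props f" "r \<in> {0..R}"
  shows "integrable N (\<lambda>z. f r (c + z))"
proof -
  obtain a b where ab: "0 \<le> a" "0 \<le> b" "\<And>r p. r \<in> {0..R} \<Longrightarrow> \<bar>f r p\<bar> \<le> a + b * \<bar>p\<bar>"
    using assms(1) unfolding Props_def LG_def by blast
  have "MP f" using assms(1) by (simp add: Props_def)
  show ?thesis by (rule integ[of "f r" a b c, OF u_meas[OF \<open>MP f\<close> assms(2)] ab(3)[OF assms(2)] ab(2)])
qed

lemma u_mono:
  assumes "MP f" "r \<in> {0..R}" shows "mono (\<lambda>z. f r (c + z))"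
  using assms unfolding MP_def mono_def by auto

lemma Tr_Lin:
  assumes "validb b" "Props f" "r \<in> {0..R}"
  shows "Tr b s f r p = Lin b (\<lambda>z. f r (p * e + s + z))"
proof -
  have "MP f" using assms(2) by (simp add: Props_def)
  show ?thesis unfolding Tr_def
    using rho_Lin[OF assms(1) u_mono[OF \<open>MP f\<close> assms(3), of "p * e + s"] u_int[OF assms(2,3), of "p * e + s"]] by simp
qed

lemma lin_p:
  assumes K: "0 \<le> K" and a: "0 \<le> a" and b: "0 \<le> b"
  shows "K * (2 * (a + b * \<bar>p * e + s\<bar>) + b * C) \<le> K * (2 * a + 2 * b * \<bar>s\<bar> + b * C) + (2 * K * b * e) * \<bar>p\<bar>"
proof -
  have "b * \<bar>p * e + s\<bar> \<le> b * (e * \<bar>p\<bar> + \<bar>s\<bar>)" using b c_bd by (intro mult_left_mono)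
  hence "K * (2 * (a + b * \<bar>p * e + s\<bar>) + b * C) \<le> K * (2 * (a + b * (e * \<bar>p\<bar> + \<bar>s\<bar>)) + b * C)"
    using K by (intro mult_left_mono) auto
  thus ?thesis by (simp add: algebra_simps)
qed

lemma Tr_LG:
  assumes bv: "validb b" and P: "Props f"
  shows "LG (Tr b s f)"
proof -
  obtain a bb where ab: "0 \<le> a" "0 \<le> bb" "\<And>r p. r \<in> {0..R} \<Longrightarrow> \<bar>f r p\<bar> \<le> a + bb * \<bar>p\<bar>"
    using P unfolding Props_def LG_def by blast
  define K where "K = 1 / (1 - snd b)"
  have K: "0 \<le> K" using bv by (simp add: K_def validb_def)
  define C where "C = EZ + QQ b"
  have "\<bar>Tr b s f r p\<bar> \<le> K * (2 * a + 2 * bb * \<bar>s\<bar> + bb * C) + (2 * K * bb * e) * \<bar>p\<bar>"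
    if r: "r \<in> {0..R}" for r p
  proof -
    have "\<bar>Tr b s f r p\<bar> = \<bar>Lin b (\<lambda>z. f r (p * e + s + z))\<bar>" using Tr_Lin[OF bv P r] by simp
    also have "\<dots> \<le> (2 * (a + bb * \<bar>p * e + s\<bar>) + bb * (EZ + QQ b)) / (1 - snd b)"
    proof (rule Lin_lg[OF bv u_int[OF P r] _ ab(2)])
      fix z show "\<bar>f r (p * e + s + z)\<bar> \<le> a + bb * \<bar>p * e + s\<bar> + bb * \<bar>z\<bar>"
        by (rule shift_bd[of "f r" "p * e + s + z" a bb "p * e + s" z, OF ab(3)[OF r] ab(2)]) simp
    qed
    also have "\<dots> = K * (2 * (a + bb * \<bar>p * e + s\<bar>) + bb * C)" unfolding K_def C_def by simp
    also have "\<dots> \<le> K * (2 * a + 2 * bb * \<bar>s\<bar> + bb * C) + (2 * K * bb * e) * \<bar>p\<bar>"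
      by (rule lin_p[OF K ab(1,2)])
    finally show ?thesis .
  qed
  moreover have "0 \<le> K * (2 * a + 2 * bb * \<bar>s\<bar> + bb * C)" "0 \<le> 2 * K * bb * e"
    using K ab epos EZ_nonneg by (auto simp: C_def QQ_def)
  ultimately show ?thesis unfolding LG_def by blast
qed

lemma Tr_LIP:
  assumes bv: "validb b" and P: "Props f"
  shows "LIP (Tr b s f)"
proof -
  obtain a bb where ab: "0 \<le> a" "0 \<le> bb" "\<And>r1 r2 p. r1 \<in> {0..R} \<Longrightarrow> r2 \<in> {0..R} \<Longrightarrow>
      \<bar>f r1 p - f r2 p\<bar> \<le> (a + bb * \<bar>p\<bar>) * \<bar>r1 - r2\<bar>"
    using P unfolding Props_def LIP_def by blast
  define K where "K = 1 / (1 - snd b)"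
  have K: "0 \<le> K" using bv by (simp add: K_def validb_def)
  define C where "C = EZ + QQ b"
  have "\<bar>Tr b s f r1 p - Tr b s f r2 p\<bar> \<le> (K * (2 * a + 2 * bb * \<bar>s\<bar> + bb * C) + (2 * K * bb * e) * \<bar>p\<bar>) * \<bar>r1 - r2\<bar>"
    if r: "r1 \<in> {0..R}" "r2 \<in> {0..R}" for r1 r2 p
  proof -
    define d where "d = \<bar>r1 - r2\<bar>"
    have d: "0 \<le> d" by (simp add: d_def)
    have "\<bar>Tr b s f r1 p - Tr b s f r2 p\<bar> = \<bar>Lin b (\<lambda>z. f r1 (p * e + s + z) - f r2 (p * e + s + z))\<bar>"
      using Tr_Lin[OF bv P r(1)] Tr_Lin[OF bv P r(2)] Lin_diff[OF u_int[OF P r(1)] u_int[OF P r(2)]] by simp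
    also have "\<dots> \<le> (2 * (a * d + bb * d * \<bar>p * e + s\<bar>) + bb * d * (EZ + QQ b)) / (1 - snd b)"
    proof (rule Lin_lg[OF bv])
      show "integrable N (\<lambda>z. f r1 (p * e + s + z) - f r2 (p * e + s + z))"
        using u_int[OF P r(1)] u_int[OF P r(2)] by (rule Bochner_Integration.integrable_diff)
      show "0 \<le> bb * d" using ab d by simp
      fix z
      have "\<bar>f r1 (p * e + s + z) - f r2 (p * e + s + z)\<bar> \<le> (a + bb * \<bar>p * e + s + z\<bar>) * d"
        using ab(3)[OF r] unfolding d_def by blast
      also have "\<dots> \<le> (a + bb * (\<bar>p * e + s\<bar> + \<bar>z\<bar>)) * d"
        using ab d by (intro mult_right_mono add_left_mono mult_left_mono abs_triangle_ineq) auto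
      finally show "\<bar>f r1 (p * e + s + z) - f r2 (p * e + s + z)\<bar> \<le> a * d + bb * d * \<bar>p * e + s\<bar> + bb * d * \<bar>z\<bar>"
        by (simp add: algebra_simps)
    qed
    also have "\<dots> = K * (2 * (a + bb * \<bar>p * e + s\<bar>) + bb * C) * d" unfolding K_def C_def by (simp add: algebra_simps add_divide_distrib)
    also have "\<dots> \<le> (K * (2 * a + 2 * bb * \<bar>s\<bar> + bb * C) + (2 * K * bb * e) * \<bar>p\<bar>) * d"
      by (rule mult_right_mono[OF lin_p[OF K ab(1,2)] d])
    finally show ?thesis unfolding d_def .
  qed
  moreover have "0 \<le> K * (2 * a + 2 * bb * \<bar>s\<bar> + bb * C)" "0 \<le> 2 * K * bb * e"
    using K ab epos EZ_nonneg by (auto simp: C_def QQ_def)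
  ultimately show ?thesis unfolding LIP_def by blast
qed

lemma Tr_MP:
  assumes bv: "validb b" and P: "Props f"
  shows "MP (Tr b s f)"
  unfolding MP_def
proof (intro ballI monoI)
  fix r p q :: real assume r: "r \<in> {0..R}" and pq: "p \<le> q"
  have "Lin b (\<lambda>z. f r (p * e + s + z)) \<le> Lin b (\<lambda>z. f r (q * e + s + z))"
  proof (rule Lin_mono[OF bv u_int[OF P r] u_int[OF P r]])
    fix z have "p * e + s + z \<le> q * e + s + z" using pq epos by (simp add: mult_right_mono)
    thus "f r (p * e + s + z) \<le> f r (q * e + s + z)" using P r by (auto simp: Props_def MP_def mono_def)
  qed
  thus "Tr b s f r p \<le> Tr b s f r q" using Tr_Lin[OF bv P r] by simp
qed

lemma Tr_MD:
  assumes bv: "validb b" and P: "Props f"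
  shows "MD (Tr b s f)"
  unfolding MD_def
proof (intro ballI impI monoI)
  fix r1 r2 p q :: real assume r: "r1 \<in> {0..R}" "r2 \<in> {0..R}" "r1 \<le> r2" and pq: "p \<le> q"
  have e: "Tr b s f r1 x - Tr b s f r2 x = Lin b (\<lambda>z. f r1 (x * e + s + z) - f r2 (x * e + s + z))" for x
    using Tr_Lin[OF bv P r(1)] Tr_Lin[OF bv P r(2)] Lin_diff[OF u_int[OF P r(1)] u_int[OF P r(2)]] by simp
  have "Lin b (\<lambda>z. f r1 (p * e + s + z) - f r2 (p * e + s + z)) \<le> Lin b (\<lambda>z. f r1 (q * e + s + z) - f r2 (q * e + s + z))"
  proof (rule Lin_mono[OF bv])
    show "integrable N (\<lambda>z. f r1 (p * e + s + z) - f r2 (p * e + s + z))"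
      using u_int[OF P r(1)] u_int[OF P r(2)] by (rule Bochner_Integration.integrable_diff)
    show "integrable N (\<lambda>z. f r1 (q * e + s + z) - f r2 (q * e + s + z))"
      using u_int[OF P r(1)] u_int[OF P r(2)] by (rule Bochner_Integration.integrable_diff)
    fix z have "p * e + s + z \<le> q * e + s + z" using pq epos by (simp add: mult_right_mono)
    thus "f r1 (p * e + s + z) - f r2 (p * e + s + z) \<le> f r1 (q * e + s + z) - f r2 (q * e + s + z)"
      using P r unfolding Props_def MD_def mono_def by blast
  qed
  thus "Tr b s f r1 p - Tr b s f r2 p \<le> Tr b s f r1 q - Tr b s f r2 q" using e by simp
qed

lemma Tr_CVX:
  assumes bv: "validb b" and P: "Props f"
  shows "CVX (Tr b s f)"
  unfolding CVX_def
proof (intro allI ballI impI)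
  fix p x y t :: real assume xy: "x \<in> {0..R}" "y \<in> {0..R}" and t: "0 \<le> t \<and> t \<le> 1"
  define r where "r = (1 - t) * x + t * y"
  have r: "r \<in> {0..R}"
  proof -
    have "0 \<le> (1 - t) * x" "0 \<le> t * y" using xy t by auto
    moreover have "(1 - t) * x \<le> (1 - t) * R" "t * y \<le> t * R" using xy t by (auto intro: mult_left_mono)
    ultimately show ?thesis unfolding r_def by (auto simp: algebra_simps)
  qed
  have "Lin b (\<lambda>z. f r (p * e + s + z)) \<le> Lin b (\<lambda>z. (1 - t) * f x (p * e + s + z) + t * f y (p * e + s + z))"
  proof (rule Lin_mono[OF bv u_int[OF P r]])
    show "integrable N (\<lambda>z. (1 - t) * f x (p * e + s + z) + t * f y (p * e + s + z))"
      using u_int[OF P xy(1)] u_int[OF P xy(2)] by (intro Bochner_Integration.integrable_add integrable_mult_right)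
    fix z show "f r (p * e + s + z) \<le> (1 - t) * f x (p * e + s + z) + t * f y (p * e + s + z)"
      using P xy t unfolding Props_def CVX_def r_def by blast
  qed
  also have "\<dots> = (1 - t) * Lin b (\<lambda>z. f x (p * e + s + z)) + t * Lin b (\<lambda>z. f y (p * e + s + z))"
    using Lin_add[OF integrable_mult_right[OF u_int[OF P xy(1)]] integrable_mult_right[OF u_int[OF P xy(2)]]]
      Lin_cmult by simp
  finally show "Tr b s f ((1 - t) * x + t * y) p \<le> (1 - t) * Tr b s f x p + t * Tr b s f y p"
    using Tr_Lin[OF bv P r] Tr_Lin[OF bv P xy(1)] Tr_Lin[OF bv P xy(2)] unfolding r_def by simp
qed

lemma Tr_Props: "validb b \<Longrightarrow> Props f \<Longrightarrow> Props (Tr b s f)"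
  using Tr_LG Tr_LIP Tr_CVX Tr_MP Tr_MD by (simp add: Props_def)

lemma Tr_Cmp:
  assumes bv: "validb b" "validb b'" and le: "fst b \<le> fst b'" "snd b \<le> snd b'"
    and P: "Props f" "Props g" and C: "Cmp f g"
  shows "Cmp (Tr b s f) (Tr b' s g)"
  unfolding Cmp_def
proof (intro ballI allI impI)
  fix r1 r2 p assume r: "r1 \<in> {0..R}" "r2 \<in> {0..R}" "r1 \<le> r2"
  define w where "w = (\<lambda>z. g r1 (p * e + s + z) - g r2 (p * e + s + z))"
  have iw: "integrable N w" unfolding w_def
    using u_int[OF P(2) r(1)] u_int[OF P(2) r(2)] by (rule Bochner_Integration.integrable_diff)
  have mw: "mono w"
  proof (rule monoI)
    fix x y :: real assume "x \<le> y"
    hence "p * e + s + x \<le> p * e + s + y" by simp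
    thus "w x \<le> w y" using P(2) r unfolding Props_def MD_def mono_def w_def by blast
  qed
  have "Tr b s f r1 p - Tr b s f r2 p = Lin b (\<lambda>z. f r1 (p * e + s + z) - f r2 (p * e + s + z))"
    using Tr_Lin[OF bv(1) P(1) r(1)] Tr_Lin[OF bv(1) P(1) r(2)] Lin_diff[OF u_int[OF P(1) r(1)] u_int[OF P(1) r(2)]] by simp
  also have "\<dots> \<le> Lin b w"
  proof (rule Lin_mono[OF bv(1) _ iw])
    show "integrable N (\<lambda>z. f r1 (p * e + s + z) - f r2 (p * e + s + z))"
      using u_int[OF P(1) r(1)] u_int[OF P(1) r(2)] by (rule Bochner_Integration.integrable_diff)
    fix z show "f r1 (p * e + s + z) - f r2 (p * e + s + z) \<le> w z"
      using C r unfolding Cmp_def w_def by blast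
  qed
  also have "\<dots> = rho b N w" using rho_Lin[OF bv(1) mw iw] by simp
  also have "\<dots> \<le> rho b' N w" by (rule rho_cmp[OF iw bv le])
  also have "\<dots> = Lin b' w" using rho_Lin[OF bv(2) mw iw] by simp
  also have "\<dots> = Tr b' s g r1 p - Tr b' s g r2 p"
    using Tr_Lin[OF bv(2) P(2) r(1)] Tr_Lin[OF bv(2) P(2) r(2)] Lin_diff[OF u_int[OF P(2) r(1)] u_int[OF P(2) r(2)]]
    unfolding w_def by simp
  finally show "Tr b s f r1 p - Tr b s f r2 p \<le> Tr b' s g r1 p - Tr b' s g r2 p" .
qed

end


lemma INF_bd:
  fixes h :: "real \<Rightarrow> real"
  assumes "S \<noteq> {}" "\<And>s. s \<in> S \<Longrightarrow> \<bar>h s\<bar> \<le> B"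
  shows "\<bar>INF s\<in>S. h s\<bar> \<le> B" "bdd_below (h ` S)"
proof -
  show bb: "bdd_below (h ` S)" by (rule bdd_belowI2[of _ "-B"]) (use assms(2) in force)
  have "- B \<le> (INF s\<in>S. h s)" by (rule cINF_greatest[OF assms(1)]) (use assms(2) in force)
  moreover obtain s where "s \<in> S" using assms(1) by blast
  moreover have "(INF s\<in>S. h s) \<le> h s" if "s \<in> S" for s by (rule cINF_lower[OF bb that])
  ultimately show "\<bar>INF s\<in>S. h s\<bar> \<le> B" using assms(2) by (smt (verit))
qed

lemma INF_mono':
  fixes h1 h2 :: "real \<Rightarrow> real"
  assumes "S \<noteq> {}" "\<And>s. s \<in> S \<Longrightarrow> \<bar>h1 s\<bar> \<le> B" "\<And>s. s \<in> S \<Longrightarrow> h1 s \<le> h2 s"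
  shows "(INF s\<in>S. h1 s) \<le> (INF s\<in>S. h2 s)"
proof (rule cINF_mono[OF assms(1) INF_bd(2)[OF assms(1,2)]])
  fix m assume "m \<in> S" thus "\<exists>n\<in>S. h1 n \<le> h2 m" using assms(3)[of m] by blast
qed

lemma INF_add:
  fixes h :: "real \<Rightarrow> real"
  assumes "S \<noteq> {}" "bdd_below (h ` S)"
  shows "(INF s\<in>S. h s + k) = (INF s\<in>S. h s) + k"
proof (rule antisym)
  have bb: "bdd_below ((\<lambda>s. h s + k) ` S)"
  proof -
    obtain m where "\<And>s. s \<in> S \<Longrightarrow> m \<le> h s" using assms(2) by (auto simp: bdd_below_def)
    thus ?thesis by (intro bdd_belowI2[of _ "m + k"]) auto
  qed
  have "(INF s\<in>S. h s + k) - k \<le> (INF s\<in>S. h s)"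
  proof (rule cINF_greatest[OF assms(1)])
    fix s assume "s \<in> S"
    thus "(INF s\<in>S. h s + k) - k \<le> h s" using cINF_lower[OF bb, of s] by simp
  qed
  thus "(INF s\<in>S. h s + k) \<le> (INF s\<in>S. h s) + k" by simp
  show "(INF s\<in>S. h s) + k \<le> (INF s\<in>S. h s + k)"
    by (rule cINF_greatest[OF assms(1)]) (use cINF_lower[OF assms(2)] in auto)
qed

context frame begin

definition Mn :: "real \<Rightarrow> (real \<Rightarrow> real \<Rightarrow> real) \<Rightarrow> real \<Rightarrow> real \<Rightarrow> real" where
  "Mn c f = (\<lambda>r p. INF x \<in> {0..min (R - r) X}. x * p - c + f (r + x) p)"

definition WW :: "(real \<Rightarrow> real \<Rightarrow> real) \<Rightarrow> real \<Rightarrow> real \<Rightarrow> real" where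
  "WW f p s = s * p + f s p"

definition MM :: "(real \<Rightarrow> real \<Rightarrow> real) \<Rightarrow> real \<Rightarrow> real \<Rightarrow> real" where
  "MM f p r = (INF s \<in> {r..R}. WW f p s)"

lemma LG_obt:
  assumes "LG f"
  obtains a b where "0 \<le> a" "0 \<le> b" "\<And>r p. r \<in> {0..R} \<Longrightarrow> \<bar>f r p\<bar> \<le> a + b * \<bar>p\<bar>"
  using assms unfolding LG_def by blast

lemma WW_bd:
  assumes "\<And>r p. r \<in> {0..R} \<Longrightarrow> \<bar>f r p\<bar> \<le> a + b * \<bar>p\<bar>" "s \<in> {0..R}"
  shows "\<bar>WW f p s\<bar> \<le> R * \<bar>p\<bar> + (a + b * \<bar>p\<bar>)"
proof -
  have "\<bar>s * p\<bar> \<le> R * \<bar>p\<bar>" using assms(2) by (auto simp: abs_mult intro: mult_right_mono)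
  thus ?thesis using assms(1)[OF assms(2), of p] abs_triangle_ineq[of "s * p" "f s p"] unfolding WW_def by linarith
qed

lemma Mn_eq:
  assumes "LG f" "r \<in> {0..R}"
  shows "Mn c f r p = MM f p r - r * p - c"
proof -
  obtain a b where ab: "0 \<le> a" "0 \<le> b" "\<And>r p. r \<in> {0..R} \<Longrightarrow> \<bar>f r p\<bar> \<le> a + b * \<bar>p\<bar>"
    using LG_obt[OF assms(1)] by blast
  have m: "min (R - r) X = R - r" using assms XR by auto
  have img: "(\<lambda>x. r + x) ` {0..R - r} = {r..R}"
    using image_add_atLeastAtMost[of r 0 "R - r"] by (simp add: add.commute)
  have "Mn c f r p = (INF x \<in> {0..R - r}. (\<lambda>s. WW f p s + (- r * p - c)) (r + x))"
    unfolding Mn_def m WW_def by (simp add: algebra_simps)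
  also have "\<dots> = (INF s \<in> {r..R}. WW f p s + (- r * p - c))"
    unfolding img[symmetric] image_image by simp
  also have "\<dots> = MM f p r + (- r * p - c)" unfolding MM_def
  proof (rule INF_add)
    show "{r..R} \<noteq> {}" using assms by auto
    show "bdd_below (WW f p ` {r..R})"
      by (rule INF_bd(2)[where B="R * \<bar>p\<bar> + (a + b * \<bar>p\<bar>)"]) (use assms WW_bd[OF ab(3)] in auto)
  qed
  finally show ?thesis by simp
qed


lemma WW_cvx:
  assumes "CVX f" "x \<in> {0..R}" "y \<in> {0..R}" "0 \<le> t" "t \<le> 1"
  shows "WW f p ((1 - t) * x + t * y) \<le> (1 - t) * WW f p x + t * WW f p y"
proof -
  have "f ((1 - t) * x + t * y) p \<le> (1 - t) * f x p + t * f y p" using assms unfolding CVX_def by blast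
  thus ?thesis unfolding WW_def by (simp add: algebra_simps)
qed

lemma WW_bd':
  assumes "LG f"
  obtains B where "\<And>s. s \<in> {0..R} \<Longrightarrow> \<bar>WW f p s\<bar> \<le> B"
proof -
  obtain a b where ab: "0 \<le> a" "0 \<le> b" "\<And>r p. r \<in> {0..R} \<Longrightarrow> \<bar>f r p\<bar> \<le> a + b * \<bar>p\<bar>"
    using LG_obt[OF assms(1)] by blast
  show ?thesis by (rule that[of "R * \<bar>p\<bar> + (a + b * \<bar>p\<bar>)"], rule WW_bd[of f a b, OF ab(3)])
qed

lemma MM_diff:
  assumes P: "LG f" "CVX f" and r: "r1 \<in> {0..R}" "r2 \<in> {0..R}" "r1 \<le> r2"
  shows "MM f p r1 - MM f p r2 = (INF s\<in>{r1..r2}. WW f p s) - WW f p r2"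
proof -
  obtain B where B: "\<And>s. s \<in> {0..R} \<Longrightarrow> \<bar>WW f p s\<bar> \<le> B" using WW_bd'[OF P(1)] by blast
  have ne1: "{r1..r2} \<noteq> {}" and ne2: "{r2..R} \<noteq> {}" using r by auto
  have bd1: "bdd_below (WW f p ` {r1..r2})" by (rule INF_bd(2)[OF ne1, where B=B]) (use B r in auto)
  have bd2: "bdd_below (WW f p ` {r2..R})" by (rule INF_bd(2)[OF ne2, where B=B]) (use B r in auto)
  define J where "J = (INF s\<in>{r1..r2}. WW f p s)"
  define I2 where "I2 = MM f p r2"
  have un: "{r1..R} = {r1..r2} \<union> {r2..R}" using r by auto
  have M1: "MM f p r1 = min J I2" unfolding MM_def J_def I2_def un image_Un
    by (subst cInf_union_distrib) (use ne1 ne2 bd1 bd2 in \<open>auto simp: inf_min\<close>)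
  have JW: "J \<le> WW f p r2" unfolding J_def by (rule cINF_lower[OF bd1]) (use r in auto)
  have IW: "I2 \<le> WW f p r2" unfolding I2_def MM_def by (rule cINF_lower[OF bd2]) (use r in auto)
  show ?thesis
  proof (cases "I2 = WW f p r2")
    case True thus ?thesis using M1 JW unfolding J_def I2_def by simp
  next
    case False
    hence "I2 < WW f p r2" using IW by simp
    have "\<exists>x\<in>WW f p ` {r2..R}. x < WW f p r2"
      by (rule cInf_lessD) (use ne2 \<open>I2 < _\<close> in \<open>auto simp: I2_def MM_def\<close>)
    then obtain t where t: "t \<in> {r2..R}" "WW f p t < WW f p r2" by blast
    have "WW f p r2 \<le> J" unfolding J_def
    proof (rule cINF_greatest[OF ne1])
      fix s assume s: "s \<in> {r1..r2}"
      show "WW f p r2 \<le> WW f p s"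
      proof (cases "s = r2")
        case False
        hence sl: "s < r2" using s by auto
        have tl: "r2 < t" using t by (cases "t = r2") auto
        define l where "l = (r2 - s) / (t - s)"
        have l: "0 < l" "l < 1" using sl tl unfolding l_def by (auto simp: field_simps)
        have lt: "l * (t - s) = r2 - s" using sl tl unfolding l_def by simp
        have "(1 - l) * s + l * t = s + l * (t - s)" by (simp add: algebra_simps)
        hence eq: "r2 = (1 - l) * s + l * t" using lt by simp
        have "WW f p r2 \<le> (1 - l) * WW f p s + l * WW f p t"
          unfolding eq by (rule WW_cvx[OF P(2)]) (use s t r l in auto)
        show ?thesis
        proof (rule ccontr)
          assume "\<not> WW f p r2 \<le> WW f p s"
          hence "(1 - l) * WW f p s \<le> (1 - l) * WW f p r2" using l by (intro mult_left_mono) auto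
          moreover have "l * WW f p t < l * WW f p r2" using l t by simp
          ultimately show False using \<open>WW f p r2 \<le> _\<close> by (simp add: algebra_simps)
        qed
      qed simp
    qed
    hence "J = WW f p r2" using JW by simp
    thus ?thesis using M1 \<open>I2 < _\<close> unfolding J_def I2_def by simp
  qed
qed

lemma Mn_diff:
  assumes P: "LG f" "CVX f" and r: "r1 \<in> {0..R}" "r2 \<in> {0..R}" "r1 \<le> r2"
  shows "Mn c f r1 p - Mn c f r2 p = (INF s\<in>{r1..r2}. (s - r1) * p + f s p - f r2 p)"
proof -
  obtain B where B: "\<And>s. s \<in> {0..R} \<Longrightarrow> \<bar>WW f p s\<bar> \<le> B" using WW_bd'[OF P(1)] by blast
  have ne1: "{r1..r2} \<noteq> {}" using r by auto
  have bd1: "bdd_below (WW f p ` {r1..r2})" by (rule INF_bd(2)[OF ne1, where B=B]) (use B r in auto)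
  have "Mn c f r1 p - Mn c f r2 p = MM f p r1 - MM f p r2 + (r2 - r1) * p"
    using Mn_eq[OF P(1) r(1), of c p] Mn_eq[OF P(1) r(2), of c p] by (simp add: algebra_simps)
  also have "\<dots> = (INF s\<in>{r1..r2}. WW f p s) + ((r2 - r1) * p - WW f p r2)"
    using MM_diff[OF P r] by simp
  also have "\<dots> = (INF s\<in>{r1..r2}. WW f p s + ((r2 - r1) * p - WW f p r2))"
    by (rule INF_add[OF ne1 bd1, symmetric])
  also have "\<dots> = (INF s\<in>{r1..r2}. (s - r1) * p + f s p - f r2 p)"
    unfolding WW_def by (simp add: algebra_simps)
  finally show ?thesis .
qed

lemma term_bd:
  assumes L: "\<And>r1 r2 p. r1 \<in> {0..R} \<Longrightarrow> r2 \<in> {0..R} \<Longrightarrow> \<bar>f r1 p - f r2 p\<bar> \<le> (a + b * \<bar>p\<bar>) * \<bar>r1 - r2\<bar>"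
    and ab: "0 \<le> a" "0 \<le> b" and r: "r1 \<in> {0..R}" "r2 \<in> {0..R}" "r1 \<le> r2" and s: "s \<in> {r1..r2}"
  shows "\<bar>(s - r1) * p + f s p - f r2 p\<bar> \<le> (\<bar>p\<bar> + a + b * \<bar>p\<bar>) * (r2 - r1)"
proof -
  have s0: "s \<in> {0..R}" using r s by auto
  have "\<bar>(s - r1) * p\<bar> \<le> (r2 - r1) * \<bar>p\<bar>" using s by (auto simp: abs_mult intro: mult_right_mono)
  moreover have "\<bar>f s p - f r2 p\<bar> \<le> (a + b * \<bar>p\<bar>) * (r2 - r1)"
  proof -
    have "\<bar>f s p - f r2 p\<bar> \<le> (a + b * \<bar>p\<bar>) * \<bar>s - r2\<bar>" by (rule L[OF s0 r(2)])
    also have "\<dots> \<le> (a + b * \<bar>p\<bar>) * (r2 - r1)" using s ab by (intro mult_left_mono) auto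
    finally show ?thesis .
  qed
  ultimately show ?thesis
    using abs_triangle_ineq[of "(s - r1) * p" "f s p - f r2 p"] by (simp add: algebra_simps)
qed

lemma Mn_LIP:
  assumes P: "Props f"
  shows "LIP (Mn c f)"
proof -
  obtain a b where ab: "0 \<le> a" "0 \<le> b" and L: "\<And>r1 r2 p. r1 \<in> {0..R} \<Longrightarrow> r2 \<in> {0..R} \<Longrightarrow>
      \<bar>f r1 p - f r2 p\<bar> \<le> (a + b * \<bar>p\<bar>) * \<bar>r1 - r2\<bar>"
    using P unfolding Props_def LIP_def by blast
  have PP: "LG f" "CVX f" using P by (auto simp: Props_def)
  have main: "\<bar>Mn c f r1 p - Mn c f r2 p\<bar> \<le> (a + (1 + b) * \<bar>p\<bar>) * \<bar>r1 - r2\<bar>"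
    if r: "r1 \<in> {0..R}" "r2 \<in> {0..R}" "r1 \<le> r2" for r1 r2 p
  proof -
    have "\<bar>Mn c f r1 p - Mn c f r2 p\<bar> \<le> (\<bar>p\<bar> + a + b * \<bar>p\<bar>) * (r2 - r1)"
      unfolding Mn_diff[OF PP r]
      by (rule INF_bd(1)) (use r term_bd[OF L ab r] in auto)
    thus ?thesis using r by (simp add: algebra_simps)
  qed
  have "\<bar>Mn c f r1 p - Mn c f r2 p\<bar> \<le> (a + (1 + b) * \<bar>p\<bar>) * \<bar>r1 - r2\<bar>"
    if r: "r1 \<in> {0..R}" "r2 \<in> {0..R}" for r1 r2 p
  proof (cases "r1 \<le> r2")
    case True thus ?thesis using main r by blast
  next
    case False thus ?thesis using main[of r2 r1 p] r by (simp add: abs_minus_commute)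
  qed
  moreover have "0 \<le> 1 + b" using ab by simp
  ultimately show ?thesis unfolding LIP_def using ab by blast
qed

lemma Mn_MD:
  assumes P: "Props f"
  shows "MD (Mn c f)"
  unfolding MD_def
proof (intro ballI impI monoI)
  fix r1 r2 p q :: real assume r: "r1 \<in> {0..R}" "r2 \<in> {0..R}" "r1 \<le> r2" and pq: "p \<le> q"
  obtain a b where ab: "0 \<le> a" "0 \<le> b" and L: "\<And>r1 r2 p. r1 \<in> {0..R} \<Longrightarrow> r2 \<in> {0..R} \<Longrightarrow>
      \<bar>f r1 p - f r2 p\<bar> \<le> (a + b * \<bar>p\<bar>) * \<bar>r1 - r2\<bar>"
    using P unfolding Props_def LIP_def by blast
  have PP: "LG f" "CVX f" using P by (auto simp: Props_def)
  show "Mn c f r1 p - Mn c f r2 p \<le> Mn c f r1 q - Mn c f r2 q"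
    unfolding Mn_diff[OF PP r]
  proof (rule INF_mono')
    show "{r1..r2} \<noteq> {}" using r by auto
    show "\<bar>(s - r1) * p + f s p - f r2 p\<bar> \<le> (\<bar>p\<bar> + a + b * \<bar>p\<bar>) * (r2 - r1)" if "s \<in> {r1..r2}" for s
      by (rule term_bd[OF L ab r that])
    fix s assume s: "s \<in> {r1..r2}"
    have "(s - r1) * p \<le> (s - r1) * q" using s pq by (auto intro: mult_left_mono)
    moreover have "f s p - f r2 p \<le> f s q - f r2 q"
      using P s r pq unfolding Props_def MD_def mono_def by auto
    ultimately show "(s - r1) * p + f s p - f r2 p \<le> (s - r1) * q + f s q - f r2 q" by simp
  qed
qed

lemma Mn_Cmp:
  assumes P: "Props f" "Props g" and C: "Cmp f g"
  shows "Cmp (Mn c f) (Mn c g)"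
  unfolding Cmp_def
proof (intro ballI allI impI)
  fix r1 r2 p assume r: "r1 \<in> {0..R}" "r2 \<in> {0..R}" "r1 \<le> r2"
  obtain a b where ab: "0 \<le> a" "0 \<le> b" and L: "\<And>r1 r2 p. r1 \<in> {0..R} \<Longrightarrow> r2 \<in> {0..R} \<Longrightarrow>
      \<bar>f r1 p - f r2 p\<bar> \<le> (a + b * \<bar>p\<bar>) * \<bar>r1 - r2\<bar>"
    using P(1) unfolding Props_def LIP_def by blast
  have PP: "LG f" "CVX f" "LG g" "CVX g" using P by (auto simp: Props_def)
  show "Mn c f r1 p - Mn c f r2 p \<le> Mn c g r1 p - Mn c g r2 p"
    unfolding Mn_diff[OF PP(1,2) r] Mn_diff[OF PP(3,4) r]
  proof (rule INF_mono')
    show "{r1..r2} \<noteq> {}" using r by auto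
    show "\<bar>(s - r1) * p + f s p - f r2 p\<bar> \<le> (\<bar>p\<bar> + a + b * \<bar>p\<bar>) * (r2 - r1)" if "s \<in> {r1..r2}" for s
      by (rule term_bd[OF L ab r that])
    fix s assume s: "s \<in> {r1..r2}"
    have "f s p - f r2 p \<le> g s p - g r2 p" using C s r unfolding Cmp_def by auto
    thus "(s - r1) * p + f s p - f r2 p \<le> (s - r1) * p + g s p - g r2 p" by simp
  qed
qed

lemma Mn_LG:
  assumes P: "Props f"
  shows "LG (Mn c f)"
proof -
  obtain a b where ab: "0 \<le> a" "0 \<le> b" "\<And>r p. r \<in> {0..R} \<Longrightarrow> \<bar>f r p\<bar> \<le> a + b * \<bar>p\<bar>"
    using P unfolding Props_def LG_def by blast
  have PP: "LG f" using P by (auto simp: Props_def)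
  have "\<bar>Mn c f r p\<bar> \<le> (a + \<bar>c\<bar>) + (2 * R + b) * \<bar>p\<bar>" if r: "r \<in> {0..R}" for r p
  proof -
    have "\<bar>MM f p r\<bar> \<le> R * \<bar>p\<bar> + (a + b * \<bar>p\<bar>)" unfolding MM_def
      by (rule INF_bd(1)) (use r WW_bd[OF ab(3)] in auto)
    moreover have "\<bar>r * p\<bar> \<le> R * \<bar>p\<bar>" using r by (auto simp: abs_mult intro: mult_right_mono)
    moreover have "\<bar>MM f p r - r * p - c\<bar> \<le> \<bar>MM f p r\<bar> + \<bar>r * p\<bar> + \<bar>c\<bar>" by linarith
    ultimately show ?thesis unfolding Mn_eq[OF PP r] by (simp add: algebra_simps)
  qed
  moreover have "0 \<le> a + \<bar>c\<bar>" "0 \<le> 2 * R + b" using ab Rpos by auto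
  ultimately show ?thesis unfolding LG_def by blast
qed

lemma Mn_MP:
  assumes P: "Props f"
  shows "MP (Mn c f)"
  unfolding MP_def
proof (intro ballI monoI)
  fix r p q :: real assume r: "r \<in> {0..R}" and pq: "p \<le> q"
  obtain a b where ab: "0 \<le> a" "0 \<le> b" "\<And>r p. r \<in> {0..R} \<Longrightarrow> \<bar>f r p\<bar> \<le> a + b * \<bar>p\<bar>"
    using P unfolding Props_def LG_def by blast
  have m: "min (R - r) X = R - r" using r XR by auto
  show "Mn c f r p \<le> Mn c f r q" unfolding Mn_def m
  proof (rule INF_mono')
    show "{0..R - r} \<noteq> {}" using r by auto
    show "\<bar>x * p - c + f (r + x) p\<bar> \<le> R * \<bar>p\<bar> + \<bar>c\<bar> + (a + b * \<bar>p\<bar>)" if x: "x \<in> {0..R - r}" for x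
    proof -
      have "\<bar>x * p\<bar> \<le> R * \<bar>p\<bar>" using x r by (auto simp: abs_mult intro: mult_right_mono)
      moreover have "\<bar>f (r + x) p\<bar> \<le> a + b * \<bar>p\<bar>" using ab(3) x r by auto
      moreover have "\<bar>x * p - c + f (r + x) p\<bar> \<le> \<bar>x * p\<bar> + \<bar>c\<bar> + \<bar>f (r + x) p\<bar>" by linarith
      ultimately show ?thesis by linarith
    qed
    fix x assume x: "x \<in> {0..R - r}"
    have "x * p \<le> x * q" using x pq by (auto intro: mult_left_mono)
    moreover have "f (r + x) p \<le> f (r + x) q" using P x r pq unfolding Props_def MP_def mono_def by auto
    ultimately show "x * p - c + f (r + x) p \<le> x * q - c + f (r + x) q" by simp
  qed
qed


lemma MM_cvx:
  assumes P: "LG f" "CVX f" and xy: "x \<in> {0..R}" "y \<in> {0..R}" and t: "0 \<le> t" "t \<le> 1"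
  shows "MM f p ((1 - t) * x + t * y) \<le> (1 - t) * MM f p x + t * MM f p y"
proof -
  obtain B where B: "\<And>s. s \<in> {0..R} \<Longrightarrow> \<bar>WW f p s\<bar> \<le> B" using WW_bd'[OF P(1)] by blast
  have bdd: "bdd_below (WW f p ` {u..R})" if "u \<in> {0..R}" for u
    by (rule INF_bd(2)[where B=B]) (use that B in auto)
  define r where "r = (1 - t) * x + t * y"
  have r: "r \<in> {0..R}"
  proof -
    have "0 \<le> (1 - t) * x" "0 \<le> t * y" using xy t by auto
    moreover have "(1 - t) * x \<le> (1 - t) * R" "t * y \<le> t * R" using xy t by (auto intro: mult_left_mono)
    ultimately show ?thesis unfolding r_def by (auto simp: algebra_simps)
  qed
  show ?thesis
  proof (cases "t = 0 \<or> t = 1")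
    case True thus ?thesis by auto
  next
    case False
    hence t': "0 < t" "t < 1" using t by auto
    have key: "MM f p r \<le> (1 - t) * WW f p s1 + t * WW f p s2" if s: "s1 \<in> {x..R}" "s2 \<in> {y..R}" for s1 s2
    proof -
      define s where "s = (1 - t) * s1 + t * s2"
      have sr: "s \<in> {r..R}"
      proof -
        have "(1 - t) * x \<le> (1 - t) * s1" "t * y \<le> t * s2" using s t by (auto intro: mult_left_mono)
        moreover have "(1 - t) * s1 \<le> (1 - t) * R" "t * s2 \<le> t * R" using s t by (auto intro: mult_left_mono)
        ultimately show ?thesis unfolding s_def r_def by (auto simp: algebra_simps)
      qed
      have "MM f p r \<le> WW f p s" unfolding MM_def by (rule cINF_lower[OF bdd[OF r] sr])
      also have "\<dots> \<le> (1 - t) * WW f p s1 + t * WW f p s2"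
        unfolding s_def by (rule WW_cvx[OF P(2)]) (use s xy t in auto)
      finally show ?thesis .
    qed
    have step1: "MM f p r - t * WW f p s2 \<le> (1 - t) * MM f p x" if s2: "s2 \<in> {y..R}" for s2
    proof -
      have "(MM f p r - t * WW f p s2) / (1 - t) \<le> MM f p x" unfolding MM_def[of f p x]
      proof (rule cINF_greatest)
        show "{x..R} \<noteq> {}" using xy by auto
        fix s1 assume "s1 \<in> {x..R}"
        from key[OF this s2] t' show "(MM f p r - t * WW f p s2) / (1 - t) \<le> WW f p s1"
          by (simp add: divide_le_eq algebra_simps)
      qed
      thus ?thesis using t' by (simp add: divide_le_eq algebra_simps)
    qed
    have "(MM f p r - (1 - t) * MM f p x) / t \<le> MM f p y" unfolding MM_def[of f p y]
    proof (rule cINF_greatest)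
      show "{y..R} \<noteq> {}" using xy by auto
      fix s2 assume "s2 \<in> {y..R}"
      from step1[OF this] t' show "(MM f p r - (1 - t) * MM f p x) / t \<le> WW f p s2"
        by (simp add: divide_le_eq algebra_simps)
    qed
    hence "MM f p r \<le> (1 - t) * MM f p x + t * MM f p y" using t' by (simp add: divide_le_eq algebra_simps)
    thus ?thesis unfolding r_def .
  qed
qed

lemma Mn_CVX:
  assumes P: "Props f"
  shows "CVX (Mn c f)"
  unfolding CVX_def
proof (intro allI ballI impI)
  fix p x y t :: real assume xy: "x \<in> {0..R}" "y \<in> {0..R}" and t: "0 \<le> t \<and> t \<le> 1"
  have PP: "LG f" "CVX f" using P by (auto simp: Props_def)
  have r: "(1 - t) * x + t * y \<in> {0..R}"
  proof -
    have "0 \<le> (1 - t) * x" "0 \<le> t * y" using xy t by auto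
    moreover have "(1 - t) * x \<le> (1 - t) * R" "t * y \<le> t * R" using xy t by (auto intro: mult_left_mono)
    ultimately show ?thesis by (auto simp: algebra_simps)
  qed
  have "MM f p ((1 - t) * x + t * y) \<le> (1 - t) * MM f p x + t * MM f p y"
    by (rule MM_cvx[OF PP xy]) (use t in auto)
  thus "Mn c f ((1 - t) * x + t * y) p \<le> (1 - t) * Mn c f x p + t * Mn c f y p"
    unfolding Mn_eq[OF PP(1) r] Mn_eq[OF PP(1) xy(1)] Mn_eq[OF PP(1) xy(2)]
    by (simp add: algebra_simps)
qed

lemma Mn_Props: "Props f \<Longrightarrow> Props (Mn c f)"
  using Mn_LG Mn_LIP Mn_CVX Mn_MP Mn_MD by (simp add: Props_def)

end


context frame begin

lemma Props_cong:
  assumes eq: "\<And>r p. r \<in> {0..R} \<Longrightarrow> f r p = g r p" and P: "Props f"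
  shows "Props g"
proof -
  have cv: "(1 - t) * x + t * y \<in> {0..R}" if "x \<in> {0..R}" "y \<in> {0..R}" "0 \<le> t" "t \<le> 1" for x y t :: real
  proof -
    have "0 \<le> (1 - t) * x" "0 \<le> t * y" using that by auto
    moreover have "(1 - t) * x \<le> (1 - t) * R" "t * y \<le> t * R" using that by (auto intro: mult_left_mono)
    ultimately show ?thesis by (auto simp: algebra_simps)
  qed
  have "LG g" using P eq unfolding Props_def LG_def by (metis (no_types, lifting))
  moreover have "LIP g" using P eq unfolding Props_def LIP_def by (metis (no_types, lifting))
  moreover have "CVX g" using P eq cv unfolding Props_def CVX_def by (metis (no_types, lifting))
  moreover have "MP g" using P eq unfolding Props_def MP_def mono_def by (metis (no_types, lifting))
  moreover have "MD g" using P eq unfolding Props_def MD_def mono_def by (metis (no_types, lifting))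
  ultimately show ?thesis by (simp add: Props_def)
qed

lemma Cmp_cong:
  assumes "\<And>r p. r \<in> {0..R} \<Longrightarrow> f r p = f' r p" "\<And>r p. r \<in> {0..R} \<Longrightarrow> g r p = g' r p" "Cmp f g"
  shows "Cmp f' g'"
  using assms unfolding Cmp_def by (metis (no_types, lifting))

definition B0 :: "real \<times> real \<Rightarrow> (real \<Rightarrow> real) \<Rightarrow> real \<Rightarrow> real \<Rightarrow> real \<Rightarrow> real \<Rightarrow> real \<Rightarrow> real" where
  "B0 b g hh pf cc = (\<lambda>r p. rho b N (\<lambda>z. (1 + hh * (R - r) + g (p * e + cc + z)) * (R - r) * pf))"

definition CF :: "real \<times> real \<Rightarrow> (real \<Rightarrow> real) \<Rightarrow> real \<Rightarrow> real \<Rightarrow> real" where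
  "CF b g cc p = Lin b (\<lambda>z. g (p * e + cc + z))"



lemma gv_int:
  assumes gm: "mono g" and gb: "\<And>y. \<bar>g y\<bar> \<le> A + L * \<bar>y\<bar>" and L: "0 \<le> L"
  shows "integrable N (\<lambda>z. g (c + z))"
  by (rule integ[of g A L c, OF borel_measurable_mono[OF gm] gb L])

lemma B0_eq:
  assumes bv: "validb b" and gm: "mono g" and gb: "\<And>y. \<bar>g y\<bar> \<le> A + L * \<bar>y\<bar>" and L: "0 \<le> L"
    and pf: "0 \<le> pf" and r: "r \<in> {0..R}"
  shows "B0 b g hh pf cc r p = pf * (R - r) * (1 + hh * (R - r) + CF b g cc p)"
proof -
  define k1 where "k1 = (1 + hh * (R - r)) * (R - r) * pf"
  define k2 where "k2 = (R - r) * pf"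
  have k2: "0 \<le> k2" using r pf by (simp add: k2_def)
  have ig: "integrable N (\<lambda>z. g (p * e + cc + z))" by (rule gv_int[OF gm gb L])
  have ue: "(\<lambda>z. (1 + hh * (R - r) + g (p * e + cc + z)) * (R - r) * pf) = (\<lambda>z. k1 + k2 * g (p * e + cc + z))"
    unfolding k1_def k2_def by (auto simp: algebra_simps)
  have mu: "mono (\<lambda>z. k1 + k2 * g (p * e + cc + z))"
    using gm k2 by (auto simp: mono_def intro: mult_left_mono)
  have iu: "integrable N (\<lambda>z. k1 + k2 * g (p * e + cc + z))"
    using ig by (intro Bochner_Integration.integrable_add rd.integrable_const integrable_mult_right)
  have "B0 b g hh pf cc r p = Lin b (\<lambda>z. k1 + k2 * g (p * e + cc + z))"
    unfolding B0_def ue by (rule rho_Lin[OF bv mu iu])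
  also have "\<dots> = k1 + k2 * CF b g cc p"
    unfolding CF_def using Lin_add[OF rd.integrable_const integrable_mult_right[OF ig]] Lin_cmult Lin_const[OF bv]
    by simp
  finally show ?thesis unfolding k1_def k2_def by (simp add: algebra_simps)
qed

lemma CF_mono:
  assumes bv: "validb b" and gm: "mono g" and gb: "\<And>y. \<bar>g y\<bar> \<le> A + L * \<bar>y\<bar>" and L: "0 \<le> L"
  shows "mono (CF b g cc)"
proof (rule monoI)
  fix p q :: real assume pq: "p \<le> q"
  show "CF b g cc p \<le> CF b g cc q" unfolding CF_def
  proof (rule Lin_mono[OF bv gv_int[OF gm gb L] gv_int[OF gm gb L]])
    fix z have "p * e + cc + z \<le> q * e + cc + z" using pq epos by (simp add: mult_right_mono)
    thus "g (p * e + cc + z) \<le> g (q * e + cc + z)" using gm by (auto simp: mono_def)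
  qed
qed

lemma CF_cmp:
  assumes bv: "validb b" "validb b'" and le: "fst b \<le> fst b'" "snd b \<le> snd b'"
    and gm: "mono g" and gb: "\<And>y. \<bar>g y\<bar> \<le> A + L * \<bar>y\<bar>" and L: "0 \<le> L"
  shows "CF b g cc p \<le> CF b' g cc p"
proof -
  have ig: "integrable N (\<lambda>z. g (p * e + cc + z))" by (rule gv_int[OF gm gb L])
  have mg: "mono (\<lambda>z. g (p * e + cc + z))" using gm by (auto simp: mono_def)
  show ?thesis unfolding CF_def
    using rho_Lin[OF bv(1) mg ig] rho_Lin[OF bv(2) mg ig] rho_cmp[OF ig bv le] by simp
qed

lemma CF_lg:
  assumes bv: "validb b" and gb: "\<And>y. \<bar>g y\<bar> \<le> A + L * \<bar>y\<bar>" and gm: "mono g" and L: "0 \<le> L" and A: "0 \<le> A"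
  shows "\<exists>a0 b0. 0 \<le> a0 \<and> 0 \<le> b0 \<and> (\<forall>p. \<bar>CF b g cc p\<bar> \<le> a0 + b0 * \<bar>p\<bar>)"
proof -
  define K where "K = 1 / (1 - snd b)"
  have K: "0 \<le> K" using bv by (simp add: K_def validb_def)
  define C where "C = EZ + QQ b"
  have "\<bar>CF b g cc p\<bar> \<le> K * (2 * A + 2 * L * \<bar>cc\<bar> + L * C) + (2 * K * L * e) * \<bar>p\<bar>" for p
  proof -
    have "\<bar>CF b g cc p\<bar> \<le> (2 * (A + L * \<bar>p * e + cc\<bar>) + L * (EZ + QQ b)) / (1 - snd b)"
      unfolding CF_def
    proof (rule Lin_lg[OF bv gv_int[OF gm gb L] _ L])
      fix z show "\<bar>g (p * e + cc + z)\<bar> \<le> A + L * \<bar>p * e + cc\<bar> + L * \<bar>z\<bar>"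
        by (rule shift_bd[of g "p * e + cc + z" A L "p * e + cc" z, OF gb L]) simp
    qed
    also have "\<dots> = K * (2 * (A + L * \<bar>p * e + cc\<bar>) + L * C)" unfolding K_def C_def by simp
    also have "\<dots> \<le> K * (2 * A + 2 * L * \<bar>cc\<bar> + L * C) + (2 * K * L * e) * \<bar>p\<bar>"
      by (rule lin_p[OF K A L])
    finally show ?thesis .
  qed
  moreover have "0 \<le> K * (2 * A + 2 * L * \<bar>cc\<bar> + L * C)" "0 \<le> 2 * K * L * e"
    using K A L epos EZ_nonneg by (auto simp: C_def QQ_def)
  ultimately show ?thesis by blast
qed

lemma sq_cvx:
  fixes a b t :: real assumes "0 \<le> t" "t \<le> 1"
  shows "((1 - t) * a + t * b)^2 \<le> (1 - t) * a^2 + t * b^2"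
proof -
  have "(1 - t) * a^2 + t * b^2 - ((1 - t) * a + t * b)^2 = t * (1 - t) * (a - b)^2"
    by (simp add: power2_eq_square algebra_simps)
  moreover have "0 \<le> t * (1 - t) * (a - b)^2" using assms by simp
  ultimately show ?thesis by linarith
qed

lemma E_Props:
  assumes cm: "mono c" and cl: "\<And>p. \<bar>c p\<bar> \<le> a0 + b0 * \<bar>p\<bar>" and a0: "0 \<le> a0" and b0: "0 \<le> b0"
    and hh: "0 \<le> hh" and pf: "0 \<le> pf"
  shows "Props (\<lambda>r p. pf * (R - r) * (1 + hh * (R - r) + c p))"
proof -
  let ?E = "\<lambda>r p. pf * (R - r) * (1 + hh * (R - r) + c p)"
  have diff: "?E r1 p - ?E r2 p = pf * (r2 - r1) * (1 + c p) + pf * hh * ((R - r1)^2 - (R - r2)^2)" for r1 r2 p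
    by (simp add: power2_eq_square algebra_simps)
  have LG: "LG ?E"
  proof -
    have "\<bar>?E r p\<bar> \<le> pf * R * (1 + hh * R + a0) + (pf * R * b0) * \<bar>p\<bar>" if r: "r \<in> {0..R}" for r p
    proof -
      have "\<bar>1 + hh * (R - r) + c p\<bar> \<le> 1 + hh * R + (a0 + b0 * \<bar>p\<bar>)"
      proof -
        have "0 \<le> hh * (R - r)" "hh * (R - r) \<le> hh * R" using r hh by (auto intro: mult_left_mono)
        thus ?thesis using cl[of p] by linarith
      qed
      moreover have "\<bar>pf * (R - r)\<bar> \<le> pf * R" using r pf by (auto intro: mult_left_mono)
      ultimately have "\<bar>pf * (R - r)\<bar> * \<bar>1 + hh * (R - r) + c p\<bar> \<le> pf * R * (1 + hh * R + (a0 + b0 * \<bar>p\<bar>))"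
        by (intro mult_mono) auto
      moreover have "\<bar>?E r p\<bar> = \<bar>pf * (R - r)\<bar> * \<bar>1 + hh * (R - r) + c p\<bar>" by (simp only: abs_mult)
      ultimately have "\<bar>?E r p\<bar> \<le> pf * R * (1 + hh * R + (a0 + b0 * \<bar>p\<bar>))" by simp
      also have "\<dots> = pf * R * (1 + hh * R + a0) + (pf * R * b0) * \<bar>p\<bar>" by (simp add: algebra_simps)
      finally show ?thesis .
    qed
    moreover have "0 \<le> pf * R * (1 + hh * R + a0)" "0 \<le> pf * R * b0" using pf Rpos hh a0 b0 by auto
    ultimately show ?thesis unfolding LG_def by blast
  qed
  have LIP: "LIP ?E"
  proof -
    have "\<bar>?E r1 p - ?E r2 p\<bar> \<le> (pf * (1 + a0 + 2 * hh * R) + (pf * b0) * \<bar>p\<bar>) * \<bar>r1 - r2\<bar>"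
      if r: "r1 \<in> {0..R}" "r2 \<in> {0..R}" for r1 r2 p
    proof -
      have sq: "(R - r1)^2 - (R - r2)^2 = (r2 - r1) * (2 * R - r1 - r2)" by (simp add: power2_eq_square algebra_simps)
      have "\<bar>2 * R - r1 - r2\<bar> \<le> 2 * R" using r by auto
      hence "(pf * hh * \<bar>r1 - r2\<bar>) * \<bar>2 * R - r1 - r2\<bar> \<le> (pf * hh * \<bar>r1 - r2\<bar>) * (2 * R)"
        using pf hh by (intro mult_left_mono) auto
      moreover have "\<bar>pf * hh * ((R - r1)^2 - (R - r2)^2)\<bar> = (pf * hh * \<bar>r1 - r2\<bar>) * \<bar>2 * R - r1 - r2\<bar>"
        unfolding sq using pf hh by (simp add: abs_mult abs_minus_commute)
      ultimately have t2: "\<bar>pf * hh * ((R - r1)^2 - (R - r2)^2)\<bar> \<le> pf * hh * (2 * R) * \<bar>r1 - r2\<bar>"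
        by (simp add: algebra_simps)
      have t1: "\<bar>pf * (r2 - r1) * (1 + c p)\<bar> \<le> pf * (1 + a0 + b0 * \<bar>p\<bar>) * \<bar>r1 - r2\<bar>"
      proof -
        have "\<bar>1 + c p\<bar> \<le> 1 + a0 + b0 * \<bar>p\<bar>" using cl[of p] by linarith
        hence "pf * \<bar>1 + c p\<bar> * \<bar>r1 - r2\<bar> \<le> pf * (1 + a0 + b0 * \<bar>p\<bar>) * \<bar>r1 - r2\<bar>"
          using pf by (intro mult_right_mono mult_left_mono) auto
        moreover have "\<bar>pf * (r2 - r1) * (1 + c p)\<bar> = pf * \<bar>1 + c p\<bar> * \<bar>r1 - r2\<bar>"
          using pf by (simp add: abs_mult abs_minus_commute)
        ultimately show ?thesis by simp
      qed
      have "\<bar>?E r1 p - ?E r2 p\<bar> \<le> \<bar>pf * (r2 - r1) * (1 + c p)\<bar> + \<bar>pf * hh * ((R - r1)^2 - (R - r2)^2)\<bar>"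
        unfolding diff by (rule abs_triangle_ineq)
      also have "\<dots> \<le> pf * (1 + a0 + b0 * \<bar>p\<bar>) * \<bar>r1 - r2\<bar> + pf * hh * (2 * R) * \<bar>r1 - r2\<bar>"
        using t1 t2 by linarith
      also have "\<dots> = (pf * (1 + a0 + 2 * hh * R) + (pf * b0) * \<bar>p\<bar>) * \<bar>r1 - r2\<bar>" by (simp add: algebra_simps)
      finally show ?thesis .
    qed
    moreover have "0 \<le> pf * (1 + a0 + 2 * hh * R)" "0 \<le> pf * b0" using pf Rpos hh a0 b0 by auto
    ultimately show ?thesis unfolding LIP_def by blast
  qed
  have CVX: "CVX ?E" unfolding CVX_def
  proof (intro allI ballI impI)
    fix p x y t :: real assume xy: "x \<in> {0..R}" "y \<in> {0..R}" and t: "0 \<le> t \<and> t \<le> 1"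
    have lin: "R - ((1 - t) * x + t * y) = (1 - t) * (R - x) + t * (R - y)" by (simp add: algebra_simps)
    have "(R - ((1 - t) * x + t * y))^2 \<le> (1 - t) * (R - x)^2 + t * (R - y)^2"
      unfolding lin by (rule sq_cvx) (use t in auto)
    hence q: "pf * hh * (R - ((1 - t) * x + t * y))^2 \<le> (1 - t) * (pf * hh * (R - x)^2) + t * (pf * hh * (R - y)^2)"
      using pf hh mult_left_mono[of "(R - ((1 - t) * x + t * y))^2" "(1 - t) * (R - x)^2 + t * (R - y)^2" "pf * hh"]
      by (simp add: algebra_simps)
    have eE: "?E r p = pf * (R - r) * (1 + c p) + pf * hh * (R - r)^2" for r
      by (simp add: power2_eq_square algebra_simps)
    have l2: "pf * (R - ((1 - t) * x + t * y)) * (1 + c p) = (1 - t) * (pf * (R - x) * (1 + c p)) + t * (pf * (R - y) * (1 + c p))"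
      by (simp add: algebra_simps)
    have "?E ((1 - t) * x + t * y) p = pf * (R - ((1 - t) * x + t * y)) * (1 + c p) + pf * hh * (R - ((1 - t) * x + t * y))^2"
      by (rule eE)
    also have "\<dots> \<le> ((1 - t) * (pf * (R - x) * (1 + c p)) + t * (pf * (R - y) * (1 + c p)))
        + ((1 - t) * (pf * hh * (R - x)^2) + t * (pf * hh * (R - y)^2))"
      unfolding l2 using q by linarith
    also have "\<dots> = (1 - t) * (pf * (R - x) * (1 + c p) + pf * hh * (R - x)^2) + t * (pf * (R - y) * (1 + c p) + pf * hh * (R - y)^2)"
      by (simp add: algebra_simps)
    also have "\<dots> = (1 - t) * ?E x p + t * ?E y p" using eE[of x] eE[of y] by simp
    finally show "?E ((1 - t) * x + t * y) p \<le> (1 - t) * ?E x p + t * ?E y p" .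
  qed
  have MP: "MP ?E" unfolding MP_def
  proof (intro ballI monoI)
    fix r p q :: real assume r: "r \<in> {0..R}" and "p \<le> q"
    hence "c p \<le> c q" using cm by (auto simp: mono_def)
    moreover have "0 \<le> pf * (R - r)" using r pf by auto
    ultimately show "?E r p \<le> ?E r q" by (intro mult_left_mono) auto
  qed
  have MD: "MD ?E" unfolding MD_def
  proof (intro ballI impI monoI)
    fix r1 r2 p q :: real assume r: "r1 \<in> {0..R}" "r2 \<in> {0..R}" "r1 \<le> r2" and "p \<le> q"
    hence "c p \<le> c q" using cm by (auto simp: mono_def)
    moreover have "0 \<le> pf * (r2 - r1)" using r pf by auto
    ultimately have "pf * (r2 - r1) * (1 + c p) \<le> pf * (r2 - r1) * (1 + c q)" by (intro mult_left_mono) auto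
    thus "?E r1 p - ?E r2 p \<le> ?E r1 q - ?E r2 q" unfolding diff by simp
  qed
  show ?thesis using LG LIP CVX MP MD by (simp add: Props_def)
qed

lemma E_Cmp:
  assumes le: "\<And>p. c p \<le> c' p" and pf: "0 \<le> pf"
  shows "Cmp (\<lambda>r p. pf * (R - r) * (1 + hh * (R - r) + c p)) (\<lambda>r p. pf * (R - r) * (1 + hh * (R - r) + c' p))"
  unfolding Cmp_def
proof (intro ballI allI impI)
  fix r1 r2 p assume r: "r1 \<in> {0..R}" "r2 \<in> {0..R}" "r1 \<le> r2"
  have d: "pf * (R - r1) * (1 + hh * (R - r1) + x) - pf * (R - r2) * (1 + hh * (R - r2) + x)
      = pf * (r2 - r1) * x + (pf * (R - r1) * (1 + hh * (R - r1)) - pf * (R - r2) * (1 + hh * (R - r2)))" for x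
    by (simp add: algebra_simps)
  have "pf * (r2 - r1) * c p \<le> pf * (r2 - r1) * c' p" using le r pf by (intro mult_left_mono) auto
  thus "pf * (R - r1) * (1 + hh * (R - r1) + c p) - pf * (R - r2) * (1 + hh * (R - r2) + c p)
       \<le> pf * (R - r1) * (1 + hh * (R - r1) + c' p) - pf * (R - r2) * (1 + hh * (R - r2) + c' p)"
    unfolding d by simp
qed

end


lemma argmin_ex:
  fixes Ob :: "real \<Rightarrow> real" and R :: real
  assumes R: "0 \<le> R" and c: "continuous_on {0..R} Ob"
  shows "\<exists>r. r \<in> {0..R} \<and> (\<forall>r'\<in>{0..R}. Ob r \<le> Ob r') \<and>
     (\<forall>r'\<in>{0..R}. (\<forall>r''\<in>{0..R}. Ob r' \<le> Ob r'') \<longrightarrow> r \<le> r')"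
proof -
  obtain x0 where x0: "x0 \<in> {0..R}" "\<And>y. y \<in> {0..R} \<Longrightarrow> Ob x0 \<le> Ob y"
    using continuous_attains_inf[of "{0..R}" Ob] c R by auto
  define S where "S = {0..R} \<inter> Ob -` {..Ob x0}"
  have S: "S = {r \<in> {0..R}. \<forall>r'\<in>{0..R}. Ob r \<le> Ob r'}"
    unfolding S_def using x0 by (auto intro: order_trans)
  have cl: "closed S" unfolding S_def by (rule continuous_closed_preimage[OF c]) auto
  have ne: "S \<noteq> {}" using x0 unfolding S_def by auto
  have bd: "bdd_below S" unfolding S_def by (rule bdd_belowI[of _ 0]) auto
  have inS: "Inf S \<in> S" by (rule closed_contains_Inf[OF ne bd cl])
  show ?thesis
  proof (intro exI conjI ballI impI)
    show "Inf S \<in> {0..R}" using inS unfolding S_def by auto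
    show "Ob (Inf S) \<le> Ob r'" if "r' \<in> {0..R}" for r' using inS that unfolding S by auto
    show "Inf S \<le> r'" if "r' \<in> {0..R}" "\<forall>r''\<in>{0..R}. Ob r' \<le> Ob r''" for r'
      by (rule cInf_lower[OF _ bd]) (use that in \<open>auto simp: S\<close>)
  qed
qed

lemma the_argmin:
  fixes Ob :: "real \<Rightarrow> real" and R :: real
  assumes R: "0 \<le> R" and c: "continuous_on {0..R} Ob"
  defines "P \<equiv> \<lambda>r. r \<in> {0..R} \<and> (\<forall>r'\<in>{0..R}. Ob r \<le> Ob r') \<and>
     (\<forall>r'\<in>{0..R}. (\<forall>r''\<in>{0..R}. Ob r' \<le> Ob r'') \<longrightarrow> r \<le> r')"
  shows "P (THE r. P r)"
proof (rule theI')
  show "\<exists>!r. P r"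
  proof -
    obtain r where "P r" using argmin_ex[OF R c] unfolding P_def by blast
    moreover have "r1 = r2" if "P r1" "P r2" for r1 r2
      using that unfolding P_def by (meson antisym)
    ultimately show ?thesis by blast
  qed
qed


lemma cont_of_LIP:
  fixes f :: "real \<Rightarrow> real"
  assumes "\<And>x y. x \<in> {0..R} \<Longrightarrow> y \<in> {0..R} \<Longrightarrow> \<bar>f x - f y\<bar> \<le> K * \<bar>x - y\<bar>" "0 \<le> K"
  shows "continuous_on {0..R} f"
proof (rule lipschitz_on_continuous_on)
  show "K-lipschitz_on {0..R} f"
    by (rule lipschitz_onI) (use assms in \<open>auto simp: dist_real_def\<close>)
qed

theorem mainTheorem12:
  fixes m :: evm and \<beta> \<beta>' :: "nat \<Rightarrow> real \<times> real"
  assumes "valid_evm m" and "assumption1 m" and "xmax m \<ge> Rmax m"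
    and "valid_beta m \<beta>" and "valid_beta m \<beta>'"
    and "\<forall>t \<le> Th m. fst (\<beta> t) \<le> fst (\<beta>' t) \<and> snd (\<beta> t) \<le> snd (\<beta>' t)"
  shows "(\<forall>t < Th m. \<forall>p r D D'. 0 < r \<and> r < Rmax m
            \<and> ((\<lambda>s. Vt m \<beta> t s p) has_real_derivative D) (at r)
            \<and> ((\<lambda>s. Vt m \<beta>' t s p) has_real_derivative D') (at r) \<longrightarrow> D \<ge> D')
       \<and> (\<forall>t < Th m. \<forall>p. thresh m \<beta> t p \<le> thresh m \<beta>' t p)"
proof -
  note vm = assms(1)
  note nf = noise_facts[OF vm]
  have fr: "frame (noise m) (Rmax m) (exp (- kY m)) (xmax m)"
  proof (intro frame.intro nz.intro frame_axioms.intro)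
    show "prob_space (noise m)" "sets (noise m) = sets borel" "integrable (noise m) (\<lambda>z. z)" by (fact nf)+
    show "0 < Rmax m" using vm by (simp add: valid_evm_def)
    show "0 < exp (- kY m)" by simp
    show "Rmax m \<le> xmax m" by (fact assms(3))
  qed
  interpret F: frame "noise m" "Rmax m" "exp (- kY m)" "xmax m" by (fact fr)
  have vb: "F.validb (\<beta> t)" "F.validb (\<beta>' t)" if "t \<le> Th m" for t
    using assms(4,5) that unfolding valid_beta_def F.validb_def by auto
  have le: "fst (\<beta> t) \<le> fst (\<beta>' t)" "snd (\<beta> t) \<le> snd (\<beta>' t)" if "t \<le> Th m" for t
    using assms(6) that by auto
  have sh: "shortage m r = Rmax m - r" for r
  proof -
    have "real (Th m) * xmax m \<ge> 1 * xmax m"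
      using vm by (intro mult_right_mono) (auto simp: valid_evm_def)
    moreover have "0 \<le> R0 m" using vm by (simp add: valid_evm_def)
    ultimately have "R0 m + real (Th m) * xmax m \<ge> Rmax m" using assms(3) by linarith
    thus ?thesis unfolding shortage_def by simp
  qed
  have gmono: "mono (gY m)" using assms(2) unfolding assumption1_def by (auto intro: strict_mono_mono)
  obtain L where L: "0 \<le> L" "\<And>y. \<bar>gY m y\<bar> \<le> \<bar>gY m 0\<bar> + L * \<bar>y\<bar>"
  proof -
    obtain L0 where L0: "\<And>x y. \<bar>gY m x - gY m y\<bar> \<le> L0 * \<bar>x - y\<bar>"
      using assms(2) unfolding assumption1_def by blast
    have "\<bar>gY m y\<bar> \<le> \<bar>gY m 0\<bar> + max L0 0 * \<bar>y\<bar>" for y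
    proof -
      have "\<bar>gY m y - gY m 0\<bar> \<le> L0 * \<bar>y\<bar>" using L0[of y 0] by simp
      also have "\<dots> \<le> max L0 0 * \<bar>y\<bar>" by (intro mult_right_mono) auto
      finally show ?thesis by linarith
    qed
    thus ?thesis using that[of "max L0 0"] by auto
  qed
  have hh: "0 \<le> gh m" and pf: "0 \<le> pref m" using vm by (auto simp: valid_evm_def)
  define cc where "cc = shift m (Th m) - gs m (real (Th m) + 1)"
  have V0: "Vb m b 0 = F.B0 (b (Th m)) (gY m) (gh m) (pref m) cc" for b
    by (intro ext) (simp add: F.B0_def sh cc_def)
  have bProps: "F.Props (F.B0 b (gY m) (gh m) (pref m) cc)" if bv: "F.validb b" for b
  proof -
    obtain a0 b0 where ab0: "0 \<le> a0" "0 \<le> b0" "\<And>p. \<bar>F.CF b (gY m) cc p\<bar> \<le> a0 + b0 * \<bar>p\<bar>"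
      using F.CF_lg[OF bv L(2) gmono L(1), of cc] by auto
    have "F.Props (\<lambda>r p. pref m * (Rmax m - r) * (1 + gh m * (Rmax m - r) + F.CF b (gY m) cc p))"
      by (rule F.E_Props[OF F.CF_mono[OF bv gmono L(2) L(1)] ab0(3) ab0(1,2) hh pf])
    thus ?thesis by (rule F.Props_cong[rotated]) (use F.B0_eq[OF bv gmono L(2) L(1) pf] in auto)
  qed
  have bCmp: "F.Cmp (F.B0 b (gY m) (gh m) (pref m) cc) (F.B0 b' (gY m) (gh m) (pref m) cc)"
    if bv: "F.validb b" "F.validb b'" and le: "fst b \<le> fst b'" "snd b \<le> snd b'" for b b'
  proof -
    have "F.Cmp (\<lambda>r p. pref m * (Rmax m - r) * (1 + gh m * (Rmax m - r) + F.CF b (gY m) cc p))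
                (\<lambda>r p. pref m * (Rmax m - r) * (1 + gh m * (Rmax m - r) + F.CF b' (gY m) cc p))"
      by (rule F.E_Cmp[OF F.CF_cmp[OF bv le gmono L(2) L(1)] pf])
    thus ?thesis by (rule F.Cmp_cong[rotated 2]) (use F.B0_eq[OF bv(1) gmono L(2) L(1) pf] F.B0_eq[OF bv(2) gmono L(2) L(1) pf] in auto)
  qed
  have VS: "Vb m b (Suc n) = F.Mn (cf m) (F.Tr (b (Th m - Suc n)) (shift m (Th m - Suc n)) (Vb m b n))" for b n
    by (intro ext) (simp add: F.Mn_def F.Tr_def Xset_def)
  have ind: "n \<le> Th m \<Longrightarrow> F.Props (Vb m \<beta> n) \<and> F.Props (Vb m \<beta>' n) \<and> F.Cmp (Vb m \<beta> n) (Vb m \<beta>' n)" for n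
  proof (induction n)
    case 0
    show ?case unfolding V0 using bProps vb bCmp le by auto
  next
    case (Suc n)
    hence IH: "F.Props (Vb m \<beta> n)" "F.Props (Vb m \<beta>' n)" "F.Cmp (Vb m \<beta> n) (Vb m \<beta>' n)" by auto
    have i: "Th m - Suc n \<le> Th m" by simp
    show ?case unfolding VS
      by (intro conjI F.Mn_Props F.Tr_Props F.Mn_Cmp F.Tr_Cmp vb[OF i] le[OF i] IH)
  qed
  have VtE: "Vt m b t = F.Tr (b t) (shift m t) (Vb m b (Th m - (t + 1)))" for b t
    by (intro ext) (simp add: Vt_def V_def F.Tr_def)
  have VtP: "F.Props (Vt m \<beta> t) \<and> F.Props (Vt m \<beta>' t) \<and> F.Cmp (Vt m \<beta> t) (Vt m \<beta>' t)" if t: "t < Th m" for t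
  proof -
    have i: "t \<le> Th m" using t by simp
    have IH: "F.Props (Vb m \<beta> (Th m - (t + 1)))" "F.Props (Vb m \<beta>' (Th m - (t + 1)))"
       "F.Cmp (Vb m \<beta> (Th m - (t + 1))) (Vb m \<beta>' (Th m - (t + 1)))" using ind[of "Th m - (t + 1)"] by auto
    show ?thesis unfolding VtE
      by (intro conjI F.Tr_Props F.Tr_Cmp vb[OF i] le[OF i] IH)
  qed
  have part1: "D \<ge> D'" if t: "t < Th m" and r: "0 < r" "r < Rmax m"
      and d1: "((\<lambda>s. Vt m \<beta> t s p) has_real_derivative D) (at r)"
      and d2: "((\<lambda>s. Vt m \<beta>' t s p) has_real_derivative D') (at r)" for t p r D D'
  proof (rule ccontr)
    assume "\<not> D \<ge> D'"
    hence neg: "D - D' < 0" by simp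
    have "((\<lambda>s. Vt m \<beta> t s p - Vt m \<beta>' t s p) has_real_derivative D - D') (at r)"
      by (rule DERIV_diff[OF d1 d2])
    from DERIV_neg_dec_right[OF this neg] obtain d where d: "d > 0"
      "\<And>h. h > 0 \<Longrightarrow> h < d \<Longrightarrow> Vt m \<beta> t r p - Vt m \<beta>' t r p > Vt m \<beta> t (r + h) p - Vt m \<beta>' t (r + h) p"
      by blast
    define h where "h = min (d / 2) ((Rmax m - r) / 2)"
    have h1: "h \<le> (Rmax m - r) / 2" "h \<le> d / 2" unfolding h_def by (rule min.cobounded2, rule min.cobounded1)
    have h0: "0 < h" using d r unfolding h_def by simp
    have h2: "2 * h \<le> Rmax m - r" using h1(1) by simp
    have h: "0 < h" "h < d" "r + h \<le> Rmax m" using d r h1 h0 h2 by linarith+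
    have "Vt m \<beta> t r p - Vt m \<beta> t (r + h) p \<le> Vt m \<beta>' t r p - Vt m \<beta>' t (r + h) p"
      using VtP[OF t] h r unfolding F.Cmp_def by auto
    with d(2)[OF h(1,2)] show False by linarith
  qed
  have part2: "thresh m \<beta> t p \<le> thresh m \<beta>' t p" if t: "t < Th m" for t p
  proof -
    have R0: "0 \<le> Rmax m" using vm by (simp add: valid_evm_def)
    have cont: "continuous_on {0..Rmax m} (\<lambda>r. r * p + Vt m b t r p)" if P: "F.Props (Vt m b t)" for b
    proof -
      obtain a c where ac: "0 \<le> a" "0 \<le> c" "\<And>r1 r2 p. r1 \<in> {0..Rmax m} \<Longrightarrow> r2 \<in> {0..Rmax m} \<Longrightarrow>
          \<bar>Vt m b t r1 p - Vt m b t r2 p\<bar> \<le> (a + c * \<bar>p\<bar>) * \<bar>r1 - r2\<bar>"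
        using P unfolding F.Props_def F.LIP_def by blast
      show ?thesis
      proof (rule cont_of_LIP)
        show "0 \<le> \<bar>p\<bar> + (a + c * \<bar>p\<bar>)" using ac by simp
        fix x y assume xy: "x \<in> {0..Rmax m}" "y \<in> {0..Rmax m}"
        have "x * p - y * p = (x - y) * p" by (simp add: algebra_simps)
        hence "\<bar>x * p - y * p\<bar> = \<bar>p\<bar> * \<bar>x - y\<bar>" by (simp add: abs_mult)
        thus "\<bar>(x * p + Vt m b t x p) - (y * p + Vt m b t y p)\<bar> \<le> (\<bar>p\<bar> + (a + c * \<bar>p\<bar>)) * \<bar>x - y\<bar>"
          using ac(3)[OF xy, of p] by (simp add: algebra_simps) linarith
      qed
    qed
    have A: "thresh m b t p \<in> {0..Rmax m} \<and>
       (\<forall>r'\<in>{0..Rmax m}. thresh m b t p * p + Vt m b t (thresh m b t p) p \<le> r' * p + Vt m b t r' p) \<and>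
       (\<forall>r'\<in>{0..Rmax m}. (\<forall>r''\<in>{0..Rmax m}. r' * p + Vt m b t r' p \<le> r'' * p + Vt m b t r'' p)
          \<longrightarrow> thresh m b t p \<le> r')" if "F.Props (Vt m b t)" for b
      unfolding thresh_def using the_argmin[OF R0 cont[OF that]] by simp
    define r1 where "r1 = thresh m \<beta> t p"
    define r2 where "r2 = thresh m \<beta>' t p"
    have A1: "r1 \<in> {0..Rmax m}" "\<And>r'. r' \<in> {0..Rmax m} \<Longrightarrow> r1 * p + Vt m \<beta> t r1 p \<le> r' * p + Vt m \<beta> t r' p"
      "\<And>r'. r' \<in> {0..Rmax m} \<Longrightarrow> (\<forall>r''\<in>{0..Rmax m}. r' * p + Vt m \<beta> t r' p \<le> r'' * p + Vt m \<beta> t r'' p) \<Longrightarrow> r1 \<le> r'"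
      using A[of \<beta>] VtP[OF t] unfolding r1_def by auto
    have A2: "r2 \<in> {0..Rmax m}" "\<And>r'. r' \<in> {0..Rmax m} \<Longrightarrow> r2 * p + Vt m \<beta>' t r2 p \<le> r' * p + Vt m \<beta>' t r' p"
      using A[of \<beta>'] VtP[OF t] unfolding r2_def by auto
    show ?thesis unfolding r1_def[symmetric] r2_def[symmetric]
    proof (rule ccontr)
      assume "\<not> r1 \<le> r2"
      hence lt: "r2 \<le> r1" by simp
      have c: "Vt m \<beta> t r2 p - Vt m \<beta> t r1 p \<le> Vt m \<beta>' t r2 p - Vt m \<beta>' t r1 p"
        using VtP[OF t] A1(1) A2(1) lt unfolding F.Cmp_def by blast
      have "r2 * p + Vt m \<beta>' t r2 p \<le> r1 * p + Vt m \<beta>' t r1 p" by (rule A2(2)[OF A1(1)])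
      with c have m2: "r2 * p + Vt m \<beta> t r2 p \<le> r1 * p + Vt m \<beta> t r1 p" by linarith
      have "r1 \<le> r2"
      proof (rule A1(3)[OF A2(1)], intro ballI)
        fix r'' assume "r'' \<in> {0..Rmax m}"
        from A1(2)[OF this] m2 show "r2 * p + Vt m \<beta> t r2 p \<le> r'' * p + Vt m \<beta> t r'' p" by linarith
      qed
      with \<open>\<not> r1 \<le> r2\<close> show False by simp
    qed
  qed
  show ?thesis using part1 part2 by blast
qed


end
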